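(* Let $m\ge 2$, $k\ge1$, $b=k(m^2-m)$, $d=k(m^2-1)$, and for $0\le i\le d-1$ let $f_i$ be the coefficient of $x^{i+1}$ in $\big(\sum_{j=0}^{m-1}\binom{m}{j}x^j\big)^{k}(1+x)^{b}$. Then, with $S$ graded by total degree, the Hilbert polynomial of $S/\mathcal I^{m,m}_{m,k}$ is $$H(n)=\sum_{i=0}^{d-1}f_i\binom{n-1}{i}.$$ In particular the (projective) dimension of the variety defined by $\mathcal I^{m,m}_{m,k}$ is $k(m^2-1)-1$ and its degree is $m^k$.
   Context: Let $F$ be an algebraically closed field, $S=F[x^{(l)}_{i,j}:1\le i,j\le m,\ 0\le l\le k-1]$, and $X(t)$ the $m\times m$ matrix over $S[t]/(t^k)$ with entries $x_{i,j}(t)=\sum_{l=0}^{k-1}x^{(l)}_{i,j}t^l$; every element of $S[t]/(t^k)$ is uniquely $\sum_{l=0}^{k-1}c_lt^l$, $c_l\in S$. $\mathcal I^{m,m}_{m,k}$ is the ideal of $S$ generated by the coefficients of all powers of $t$ of $\det X(t)$ (these coefficients are homogeneous of degree $m$). *)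

theory Defs
  imports "HOL-Library.Poly_Mapping" "HOL-Computational_Algebra.Polynomial"
    "Jordan_Normal_Form.Determinant"
begin

text \<open>Variables x^(l)_{i,j} are indexed by triples (i,j,l).  The polynomial ring
 S = F[x] is represented as finitely supported maps from monomials (finitely supported
 exponent vectors) to coefficients.\<close>

type_synonym 'a mpoly = "((nat \<times> nat \<times> nat) \<Rightarrow>\<^sub>0 nat) \<Rightarrow>\<^sub>0 'a"

definition var :: "nat \<Rightarrow> nat \<Rightarrow> nat \<Rightarrow> 'a::comm_ring_1 mpoly" where
  "var i j l = Poly_Mapping.single (Poly_Mapping.single (i, j, l) 1) 1"

definition mon_deg :: "((nat \<times> nat \<times> nat) \<Rightarrow>\<^sub>0 nat) \<Rightarrow> nat" where
  "mon_deg \<alpha> = sum (Poly_Mapping.lookup \<alpha>) (Poly_Mapping.keys \<alpha>)"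

definition mscale :: "'a::field \<Rightarrow> 'a mpoly \<Rightarrow> 'a mpoly" where
  "mscale c p = Poly_Mapping.map ((*) c) p"

text \<open>The matrix X(t), entries in S[t]; reduction modulo t^k is a ring homomorphism,
 so the coefficients of t^l (l < k) of det X(t) in S[t]/(t^k) are the coefficients
 of t^l (l<k) of the determinant computed in S[t].\<close>
definition Xmat :: "nat \<Rightarrow> nat \<Rightarrow> 'a::comm_ring_1 mpoly poly mat" where
  "Xmat m k = mat m m (\<lambda>(i, j). (\<Sum>l<k. monom (var i j l) l))"

definition det_coeffs :: "nat \<Rightarrow> nat \<Rightarrow> 'a::comm_ring_1 mpoly set" where
  "det_coeffs m k = {coeff (det (Xmat m k)) l | l. l < k}"

definition ideal_gen :: "'b::comm_ring_1 set \<Rightarrow> 'b set" where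
  "ideal_gen G = {\<Sum>g\<in>A. c g * g | A c. finite A \<and> A \<subseteq> G}"

definition I_ideal :: "nat \<Rightarrow> nat \<Rightarrow> 'a::comm_ring_1 mpoly set" where
  "I_ideal m k = ideal_gen (det_coeffs m k)"

definition hom_part :: "nat \<Rightarrow> nat \<Rightarrow> nat \<Rightarrow> 'a::comm_ring_1 mpoly set" where
  "hom_part m k n = {p. \<forall>\<alpha>\<in>Poly_Mapping.keys p. mon_deg \<alpha> = n \<and>
      (\<forall>(i, j, l)\<in>Poly_Mapping.keys \<alpha>. i < m \<and> j < m \<and> l < k)}"

text \<open>Hilbert function of S/I: dim_F (S_n / I_n) = dim_F S_n - dim_F (I \<inter> S_n).\<close>
definition hilbert_fun :: "'a::field itself \<Rightarrow> nat \<Rightarrow> nat \<Rightarrow> nat \<Rightarrow> nat" where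
  "hilbert_fun _ m k n =
     vector_space.dim (mscale :: 'a \<Rightarrow> 'a mpoly \<Rightarrow> 'a mpoly) (hom_part m k n)
     - vector_space.dim (mscale :: 'a \<Rightarrow> 'a mpoly \<Rightarrow> 'a mpoly) (I_ideal m k \<inter> hom_part m k n)"

definition fcoeff :: "nat \<Rightarrow> nat \<Rightarrow> nat \<Rightarrow> nat" where
  "fcoeff m k i = coeff ((\<Sum>j<m. monom (m choose j) j) ^ k * [:1, 1:] ^ (k * (m^2 - m))) (i + 1)"

end

theory Submission
  imports Defs "HOL-Library.FuncSet"
begin


type_synonym mon = "(nat \<times> nat \<times> nat) \<Rightarrow>\<^sub>0 nat"

abbreviation lookup where "lookup \<equiv> Poly_Mapping.lookup"
abbreviation keys where "keys \<equiv> Poly_Mapping.keys"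

lemma lookup_mscale [simp]: "lookup (mscale c p) a = c * lookup p a"
  by (simp add: mscale_def Poly_Mapping.map.rep_eq when_def)

lemma mscale_conv: "mscale c p = Poly_Mapping.single 0 c * p"
  by (simp add: mscale_def mult_map_scale_conv_mult)

global_interpretation MS: vector_space "mscale :: 'a::field \<Rightarrow> 'a mpoly \<Rightarrow> 'a mpoly"
  by unfold_locales (simp_all add: poly_mapping_eq_iff fun_eq_iff lookup_add algebra_simps)

lemma tri_inj:
  fixes h :: "'i \<Rightarrow> 'a::field mpoly" and lt :: "'i \<Rightarrow> mon" and C :: "mon \<Rightarrow> int"
  assumes inj: "inj_on lt I"
    and lead: "\<And>i. i \<in> I \<Longrightarrow> lookup (h i) (lt i) \<noteq> 0"
    and low: "\<And>i \<beta>. i \<in> I \<Longrightarrow> \<beta> \<in> keys (h i) \<Longrightarrow> \<beta> \<noteq> lt i \<Longrightarrow> C \<beta> > C (lt i)"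
  shows "inj_on h I"
proof (rule inj_onI)
  fix i j assume i: "i \<in> I" and j: "j \<in> I" and e: "h i = h j"
  show "i = j"
  proof (rule ccontr)
    assume "i \<noteq> j"
    then have ne: "lt i \<noteq> lt j" using inj i j by (auto dest: inj_onD)
    have "lt j \<in> keys (h i)" using lead[OF j] e by (metis in_keys_iff)
    then have "C (lt j) > C (lt i)" using low[OF i] ne by auto
    moreover have "lt i \<in> keys (h j)" using lead[OF i] e by (metis in_keys_iff)
    then have "C (lt i) > C (lt j)" using low[OF j] ne by auto
    ultimately show False by simp
  qed
qed

lemma tri_indep:
  fixes h :: "'i \<Rightarrow> 'a::field mpoly" and lt :: "'i \<Rightarrow> mon" and C :: "mon \<Rightarrow> int"
  assumes inj: "inj_on lt I"
    and lead: "\<And>i. i \<in> I \<Longrightarrow> lookup (h i) (lt i) \<noteq> 0"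
    and low: "\<And>i \<beta>. i \<in> I \<Longrightarrow> \<beta> \<in> keys (h i) \<Longrightarrow> \<beta> \<noteq> lt i \<Longrightarrow> C \<beta> > C (lt i)"
  shows "\<not> MS.dependent (h ` I)"
proof
  have injh: "inj_on h I" by (rule tri_inj[of lt I h C]) (use inj lead low in auto)
  assume "MS.dependent (h ` I)"
  then obtain t u where t: "finite t" "t \<subseteq> h ` I" and s: "(\<Sum>v\<in>t. mscale (u v) v) = 0"
    and nz: "\<exists>v\<in>t. u v \<noteq> 0"
    unfolding MS.dependent_explicit by blast
  obtain J where J: "J \<subseteq> I" "t = h ` J" using t(2) by (meson subset_image_iff)
  have injJ: "inj_on h J" using injh J(1) by (rule inj_on_subset)
  have finJ: "finite J" using t(1) J(2) injJ finite_image_iff by blast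
  define K where "K = {i \<in> J. u (h i) \<noteq> 0}"
  have finK: "finite K" using finJ by (simp add: K_def)
  have Kne: "K \<noteq> {}" using nz J(2) by (auto simp: K_def)
  define c0 where "c0 = Min ((\<lambda>i. C (lt i)) ` K)"
  have "c0 \<in> (\<lambda>i. C (lt i)) ` K" unfolding c0_def using finK Kne by (intro Min_in) auto
  then obtain i0 where i0: "i0 \<in> K" "C (lt i0) = c0" by auto
  have mini: "\<And>i. i \<in> K \<Longrightarrow> C (lt i0) \<le> C (lt i)"
    using i0(2) finK unfolding c0_def by (auto intro: Min_le)
  have i0J: "i0 \<in> J" using i0 K_def by auto
  have s2: "(\<Sum>i\<in>J. mscale (u (h i)) (h i)) = 0"
    using s J(2) injJ by (simp add: sum.reindex)
  have "0 = lookup (\<Sum>i\<in>J. mscale (u (h i)) (h i)) (lt i0)" using s2 by simp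
  also have "\<dots> = (\<Sum>i\<in>J. u (h i) * lookup (h i) (lt i0))"
    by (simp add: lookup_sum)
  also have "\<dots> = u (h i0) * lookup (h i0) (lt i0) + (\<Sum>i\<in>J-{i0}. u (h i) * lookup (h i) (lt i0))"
    using finJ i0J by (simp add: sum.remove)
  also have "(\<Sum>i\<in>J-{i0}. u (h i) * lookup (h i) (lt i0)) = 0"
  proof (rule sum.neutral, rule ballI)
    fix i assume i: "i \<in> J - {i0}"
    show "u (h i) * lookup (h i) (lt i0) = 0"
    proof (rule ccontr)
      assume "u (h i) * lookup (h i) (lt i0) \<noteq> 0"
      then have ui: "u (h i) \<noteq> 0" and li: "lt i0 \<in> keys (h i)" by (auto simp: in_keys_iff)
      have iK: "i \<in> K" using i ui K_def by auto
      have "lt i0 \<noteq> lt i" using inj i i0J J(1) by (auto dest: inj_onD)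
      then have "C (lt i0) > C (lt i)" using low[of i "lt i0"] li i J(1) by auto
      with mini[OF iK] show False by simp
    qed
  qed
  finally have "u (h i0) * lookup (h i0) (lt i0) = 0" by simp
  moreover have "u (h i0) \<noteq> 0" using i0 K_def by auto
  moreover have "lookup (h i0) (lt i0) \<noteq> 0" using lead i0J J(1) by auto
  ultimately show False by simp
qed



lemma sum_keys_superset:
  assumes "finite F" "keys \<alpha> \<subseteq> F" "\<And>v. h v 0 = 0"
  shows "(\<Sum>v\<in>keys \<alpha>. h v (lookup \<alpha> v)) = (\<Sum>v\<in>F. h v (lookup \<alpha> v))"
  by (rule sum.mono_neutral_left) (use assms in \<open>auto simp: in_keys_iff\<close>)

lemma keys_add_nat: "keys (\<alpha> + \<beta>) = keys \<alpha> \<union> keys (\<beta> :: 'b \<Rightarrow>\<^sub>0 nat)"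
  by (auto simp: in_keys_iff lookup_add)

lemma mon_deg_superset:
  assumes "finite F" "keys \<alpha> \<subseteq> F"
  shows "mon_deg \<alpha> = (\<Sum>v\<in>F. lookup \<alpha> v)"
  unfolding mon_deg_def using sum_keys_superset[OF assms, of "\<lambda>v x. x"] by simp

lemma mon_deg_add: "mon_deg (\<alpha> + \<beta>) = mon_deg \<alpha> + mon_deg \<beta>"
proof -
  let ?F = "keys \<alpha> \<union> keys \<beta>"
  have "mon_deg (\<alpha> + \<beta>) = (\<Sum>v\<in>?F. lookup (\<alpha> + \<beta>) v)"
    by (rule mon_deg_superset) (auto simp: keys_add_nat)
  also have "\<dots> = (\<Sum>v\<in>?F. lookup \<alpha> v) + (\<Sum>v\<in>?F. lookup \<beta> v)"
    by (simp add: lookup_add sum.distrib)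
  also have "\<dots> = mon_deg \<alpha> + mon_deg \<beta>"
    using mon_deg_superset[of "keys \<alpha> \<union> keys \<beta>" \<alpha>] mon_deg_superset[of "keys \<alpha> \<union> keys \<beta>" \<beta>] by simp
  finally show ?thesis .
qed

lemma mon_deg_single [simp]: "mon_deg (Poly_Mapping.single v n) = n"
  by (simp add: mon_deg_def)

lemma mon_deg_zero [simp]: "mon_deg 0 = 0"
  by (simp add: mon_deg_def)

definition lin :: "((nat \<times> nat \<times> nat) \<Rightarrow> int) \<Rightarrow> mon \<Rightarrow> int" where
  "lin w \<alpha> = (\<Sum>v\<in>keys \<alpha>. int (lookup \<alpha> v) * w v)"

lemma lin_superset:
  assumes "finite F" "keys \<alpha> \<subseteq> F"
  shows "lin w \<alpha> = (\<Sum>v\<in>F. int (lookup \<alpha> v) * w v)"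
  unfolding lin_def using sum_keys_superset[OF assms, of "\<lambda>v x. int x * w v"] by simp

lemma lin_add: "lin w (\<alpha> + \<beta>) = lin w \<alpha> + lin w \<beta>"
proof -
  let ?F = "keys \<alpha> \<union> keys \<beta>"
  have "lin w (\<alpha> + \<beta>) = (\<Sum>v\<in>?F. int (lookup (\<alpha> + \<beta>) v) * w v)"
    by (rule lin_superset) (auto simp: keys_add_nat)
  also have "\<dots> = (\<Sum>v\<in>?F. int (lookup \<alpha> v) * w v) + (\<Sum>v\<in>?F. int (lookup \<beta> v) * w v)"
    by (simp add: lookup_add sum.distrib algebra_simps)
  also have "\<dots> = lin w \<alpha> + lin w \<beta>"
    using lin_superset[of "keys \<alpha> \<union> keys \<beta>" \<alpha>] lin_superset[of "keys \<alpha> \<union> keys \<beta>" \<beta>] by simp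
  finally show ?thesis .
qed

lemma lin_single [simp]: "lin w (Poly_Mapping.single v n) = int n * w v"
  by (simp add: lin_def)

lemma lin_zero [simp]: "lin w 0 = 0"
  by (simp add: lin_def)

lemma lin_sum: "lin w (\<Sum>i\<in>I. \<alpha> i) = (\<Sum>i\<in>I. lin w (\<alpha> i))"
  by (induction I rule: infinite_finite_induct) (auto simp: lin_add)

lemma mon_deg_sum: "mon_deg (\<Sum>i\<in>I. \<alpha> i) = (\<Sum>i\<in>I. mon_deg (\<alpha> i))"
  by (induction I rule: infinite_finite_induct) (auto simp: mon_deg_add)

lemma keys_sum_nat: "finite I \<Longrightarrow> keys (\<Sum>i\<in>I. (\<alpha> i :: 'b \<Rightarrow>\<^sub>0 nat)) = (\<Union>i\<in>I. keys (\<alpha> i))"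
  by (induction I rule: finite_induct) (auto simp: keys_add_nat)

definition Vset :: "nat \<Rightarrow> nat \<Rightarrow> (nat \<times> nat \<times> nat) set" where
  "Vset m k = {..<m} \<times> {..<m} \<times> {..<k}"

lemma finite_Vset [simp]: "finite (Vset m k)"
  by (simp add: Vset_def)

lemma card_Vset: "card (Vset m k) = m * m * k"
  by (simp add: Vset_def card_cartesian_product)

definition Mon :: "nat \<Rightarrow> nat \<Rightarrow> nat \<Rightarrow> mon set" where
  "Mon m k d = {\<alpha>. mon_deg \<alpha> = d \<and> keys \<alpha> \<subseteq> Vset m k}"

lemma hom_part_eq: "hom_part m k n = {p. keys p \<subseteq> Mon m k n}"
  unfolding hom_part_def Mon_def Vset_def by fastforce

lemma lookup_le_mon_deg: "lookup \<alpha> v \<le> mon_deg \<alpha>"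
proof (cases "v \<in> keys \<alpha>")
  case True
  then show ?thesis unfolding mon_deg_def by (intro member_le_sum) auto
qed (simp add: in_keys_iff)

lemma finite_Mon [simp]: "finite (Mon m k d)"
proof -
  let ?f = "\<lambda>\<alpha>. restrict (lookup \<alpha>) (Vset m k)"
  have "?f ` Mon m k d \<subseteq> PiE (Vset m k) (\<lambda>_. {..d})"
    by (auto simp: Mon_def lookup_le_mon_deg)
  moreover have "inj_on ?f (Mon m k d)"
  proof (rule inj_onI)
    fix \<alpha> \<beta> assume a: "\<alpha> \<in> Mon m k d" and b: "\<beta> \<in> Mon m k d" and e: "?f \<alpha> = ?f \<beta>"
    show "\<alpha> = \<beta>"
    proof (rule poly_mapping_eqI)
      fix v show "lookup \<alpha> v = lookup \<beta> v"
      proof (cases "v \<in> Vset m k")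
        case True then show ?thesis using e by (metis restrict_apply')
      next
        case False
        have "v \<notin> keys \<alpha>" "v \<notin> keys \<beta>" using a b False by (auto simp: Mon_def)
        then show ?thesis by (simp add: not_in_keys_iff_lookup_eq_zero)
      qed
    qed
  qed
  ultimately show ?thesis
    by (meson finite_PiE finite_Vset finite_atMost finite_imageD finite_subset)
qed



lemma poly_expand: "p = (\<Sum>\<alpha>\<in>keys p. Poly_Mapping.single \<alpha> (lookup p \<alpha>))"
proof (rule poly_mapping_eqI)
  fix \<beta>
  have "lookup (\<Sum>\<alpha>\<in>keys p. Poly_Mapping.single \<alpha> (lookup p \<alpha>)) \<beta>
      = (\<Sum>\<alpha>\<in>keys p. (lookup p \<alpha> when \<alpha> = \<beta>))"
    by (simp add: lookup_sum lookup_single)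
  also have "\<dots> = lookup p \<beta>"
    by (cases "\<beta> \<in> keys p") (auto simp: when_def in_keys_iff)
  finally show "lookup p \<beta> = lookup (\<Sum>\<alpha>\<in>keys p. Poly_Mapping.single \<alpha> (lookup p \<alpha>)) \<beta>" ..
qed

lemma mscale_single: "mscale c (Poly_Mapping.single \<alpha> 1) = Poly_Mapping.single \<alpha> c"
  by (rule poly_mapping_eqI) (simp add: lookup_single when_def)

lemma poly_expand_mscale:
  "p = (\<Sum>\<alpha>\<in>keys p. mscale (lookup p \<alpha>) (Poly_Mapping.single \<alpha> (1::'a::field)))"
  by (subst poly_expand) (simp add: mscale_single)

lemma span_singles:
  assumes "finite B"
  shows "MS.span ((\<lambda>\<alpha>. Poly_Mapping.single \<alpha> (1::'a::field)) ` B) = {p. keys p \<subseteq> B}"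
proof
  have sub: "MS.subspace {p :: 'a mpoly. keys p \<subseteq> B}"
  proof -
    have k1: "\<And>x y :: 'a mpoly. keys (x+y) \<subseteq> keys x \<union> keys y" by (rule keys_add)
    have k2: "\<And>c (x :: 'a mpoly). keys (mscale c x) \<subseteq> keys x" by (auto simp: in_keys_iff)
    have k0: "keys (0::'a mpoly) \<subseteq> B" by simp
    have k3: "\<And>x y :: 'a mpoly. keys x \<subseteq> B \<Longrightarrow> keys y \<subseteq> B \<Longrightarrow> keys (x+y) \<subseteq> B" using k1 by blast
    have k4: "\<And>c (x :: 'a mpoly). keys x \<subseteq> B \<Longrightarrow> keys (mscale c x) \<subseteq> B" using k2 by blast
    show ?thesis unfolding MS.subspace_def mem_Collect_eq using k0 k3 k4 by blast
  qed
  show "MS.span ((\<lambda>\<alpha>. Poly_Mapping.single \<alpha> (1::'a)) ` B) \<subseteq> {p. keys p \<subseteq> B}"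
    using sub by (intro MS.span_minimal) auto
  show "{p. keys p \<subseteq> B} \<subseteq> MS.span ((\<lambda>\<alpha>. Poly_Mapping.single \<alpha> (1::'a)) ` B)"
  proof
    fix p :: "'a mpoly" assume "p \<in> {p. keys p \<subseteq> B}"
    then have kb: "keys p \<subseteq> B" by simp
    have "(\<Sum>\<alpha>\<in>keys p. mscale (lookup p \<alpha>) (Poly_Mapping.single \<alpha> (1::'a)))
          \<in> MS.span ((\<lambda>\<alpha>. Poly_Mapping.single \<alpha> 1) ` B)"
      by (intro MS.span_sum MS.span_scale MS.span_base) (use kb in auto)
    then show "p \<in> MS.span ((\<lambda>\<alpha>. Poly_Mapping.single \<alpha> 1) ` B)"
      using poly_expand_mscale[of p] by simp
  qed
qed

lemma indep_singles:
  "\<not> MS.dependent ((\<lambda>\<alpha>. Poly_Mapping.single \<alpha> (1::'a::field)) ` B)"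
  by (rule tri_indep[where h="\<lambda>\<alpha>. Poly_Mapping.single \<alpha> (1::'a)" and lt=id and C="\<lambda>_. 0" and I=B]) simp_all

lemma dim_keys_subset:
  assumes "finite B"
  shows "MS.dim {p :: 'a::field mpoly. keys p \<subseteq> B} = card B"
proof -
  have "MS.dim (MS.span ((\<lambda>\<alpha>. Poly_Mapping.single \<alpha> (1::'a)) ` B)) = card ((\<lambda>\<alpha>. Poly_Mapping.single \<alpha> (1::'a)) ` B)"
    by (rule MS.dim_span_eq_card_independent[OF indep_singles[of B]])
  then have "MS.dim {p :: 'a mpoly. keys p \<subseteq> B} = card ((\<lambda>\<alpha>. Poly_Mapping.single \<alpha> (1::'a)) ` B)"
    by (simp only: span_singles[OF assms])
  also have "\<dots> = card B"
    by (rule card_image, rule inj_onI) (metis lookup_single_eq lookup_single_not_eq one_neq_zero)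
  finally show ?thesis .
qed

lemma dim_hom_part: "MS.dim (hom_part m k n :: 'a::field mpoly set) = card (Mon m k n)"
  by (simp add: hom_part_eq dim_keys_subset)

definition restr :: "mon set \<Rightarrow> 'a::zero mpoly \<Rightarrow> 'a mpoly" where
  "restr S p = Abs_poly_mapping (\<lambda>\<alpha>. lookup p \<alpha> when \<alpha> \<in> S)"

lemma lookup_restr: "lookup (restr S p) \<alpha> = (lookup p \<alpha> when \<alpha> \<in> S)"
proof -
  have "finite {\<alpha>. (lookup p \<alpha> when \<alpha> \<in> S) \<noteq> 0}"
    by (rule finite_subset[of _ "keys p"]) (auto simp: in_keys_iff)
  then show ?thesis by (simp add: restr_def)
qed

lemma restr_add: "restr S (p + q) = restr S p + restr S q"
  by (rule poly_mapping_eqI) (simp add: lookup_restr lookup_add when_def)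

lemma restr_0 [simp]: "restr S 0 = 0"
  by (rule poly_mapping_eqI) (simp add: lookup_restr)

lemma restr_sum: "restr S (\<Sum>i\<in>I. p i) = (\<Sum>i\<in>I. restr S (p i))"
  by (induction I rule: infinite_finite_induct) (auto simp: restr_add)

lemma restr_id: "keys p \<subseteq> S \<Longrightarrow> restr S p = p"
  by (rule poly_mapping_eqI) (auto simp: lookup_restr when_def in_keys_iff)

lemma restr_zero: "keys p \<inter> S = {} \<Longrightarrow> restr S p = 0"
  by (rule poly_mapping_eqI) (auto simp: lookup_restr when_def in_keys_iff)

lemma keys_restr: "keys (restr S p) \<subseteq> keys p \<inter> S"
  by (auto simp: in_keys_iff lookup_restr when_def split: if_splits)

lemma restr_split: "p = restr S p + restr (- S) p"
  by (rule poly_mapping_eqI) (simp add: lookup_restr lookup_add when_def)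

lemma single_mult_expand:
  "Poly_Mapping.single \<mu> 1 * (p :: 'a::comm_ring_1 mpoly) =
   (\<Sum>\<beta>\<in>keys p. Poly_Mapping.single (\<mu> + \<beta>) (lookup p \<beta>))"
proof -
  have "Poly_Mapping.single \<mu> 1 * p = Poly_Mapping.single \<mu> 1 * (\<Sum>\<beta>\<in>keys p. Poly_Mapping.single \<beta> (lookup p \<beta>))"
    by (subst poly_expand) simp
  also have "\<dots> = (\<Sum>\<beta>\<in>keys p. Poly_Mapping.single (\<mu> + \<beta>) (lookup p \<beta>))"
    by (simp add: sum_distrib_left mult_single)
  finally show ?thesis .
qed

lemma keys_single_mult: "keys (Poly_Mapping.single \<mu> 1 * (p :: 'a::comm_ring_1 mpoly)) \<subseteq> (+) \<mu> ` keys p"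
  using keys_mult[of "Poly_Mapping.single \<mu> 1" p] by auto

lemma lookup_single_mult: "lookup (Poly_Mapping.single \<mu> 1 * (p :: 'a::comm_ring_1 mpoly)) (\<mu> + \<beta>) = lookup p \<beta>"
proof -
  have "lookup (Poly_Mapping.single \<mu> 1 * p) (\<mu> + \<beta>) = (\<Sum>\<gamma>\<in>keys p. (lookup p \<gamma> when \<mu> + \<gamma> = \<mu> + \<beta>))"
    by (subst single_mult_expand) (simp add: lookup_sum lookup_single)
  also have "\<dots> = (\<Sum>\<gamma>\<in>keys p. (lookup p \<gamma> when \<gamma> = \<beta>))"
    by simp
  also have "\<dots> = lookup p \<beta>"
    by (cases "\<beta> \<in> keys p") (auto simp: when_def in_keys_iff)
  finally show ?thesis .
qed



definition tm :: "nat \<Rightarrow> (nat \<Rightarrow> nat) \<Rightarrow> (nat \<Rightarrow> nat) \<Rightarrow> mon" where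
  "tm m \<sigma> f = (\<Sum>i\<in>{0..<m}. Poly_Mapping.single (i, \<sigma> i, f i) 1)"

definition Perms :: "nat \<Rightarrow> (nat \<Rightarrow> nat) set" where
  "Perms m = {\<sigma>. \<sigma> permutes {0..<m}}"

definition Fset :: "nat \<Rightarrow> nat \<Rightarrow> nat \<Rightarrow> (nat \<Rightarrow> nat) set" where
  "Fset m k l = {f \<in> PiE {0..<m} (\<lambda>_. {..<k}). sum f {0..<m} = l}"

lemma prod_monom: "(\<Prod>i\<in>I. monom (c i) (n i)) = monom (\<Prod>i\<in>I. c i) (\<Sum>i\<in>I. n i)"
  by (induction I rule: infinite_finite_induct) (auto simp: mult_monom one_pCons monom_0)

lemma prod_single: "(\<Prod>i\<in>I. Poly_Mapping.single (a i) (1::'a::comm_semiring_1)) = Poly_Mapping.single (\<Sum>i\<in>I. a i) 1"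
  by (induction I rule: infinite_finite_induct) (auto simp: mult_single)

lemma coeff_signof: "coeff (signof \<sigma> * p) l = signof \<sigma> * coeff p (l::nat)"
  by (cases \<sigma> rule: sign_cases) simp_all

lemma g_expand:
  "coeff (det (Xmat m k) :: 'a::comm_ring_1 mpoly poly) l =
    (\<Sum>\<sigma>\<in>Perms m. \<Sum>f\<in>Fset m k l. signof \<sigma> * Poly_Mapping.single (tm m \<sigma> f) 1)"
proof -
  have "det (Xmat m k) = (\<Sum>\<sigma>\<in>Perms m. signof \<sigma> * (\<Prod>i = 0..<m. (Xmat m k :: 'a mpoly poly mat) $$ (i, \<sigma> i)))"
    by (simp add: det_def Xmat_def Perms_def)
  also have "\<dots> = (\<Sum>\<sigma>\<in>Perms m. signof \<sigma> *
      (\<Sum>f\<in>PiE {0..<m} (\<lambda>_. {..<k}). monom (Poly_Mapping.single (tm m \<sigma> f) 1) (sum f {0..<m})))"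
  proof (rule sum.cong[OF refl])
    fix \<sigma> assume s: "\<sigma> \<in> Perms m"
    have img: "\<And>i. i < m \<Longrightarrow> \<sigma> i < m"
      using s permutes_in_image[of \<sigma> "{0..<m}"] by (auto simp: Perms_def)
    have "(\<Prod>i = 0..<m. (Xmat m k :: 'a mpoly poly mat) $$ (i, \<sigma> i))
        = (\<Prod>i = 0..<m. \<Sum>a\<in>{..<k}. monom (var i (\<sigma> i) a :: 'a mpoly) a)"
      by (rule prod.cong[OF refl]) (simp add: Xmat_def img)
    also have "\<dots> = (\<Sum>f\<in>PiE {0..<m} (\<lambda>_. {..<k}). \<Prod>i = 0..<m. monom (var i (\<sigma> i) (f i) :: 'a mpoly) (f i))"
      by (rule prod_sum_PiE) auto
    also have "\<dots> = (\<Sum>f\<in>PiE {0..<m} (\<lambda>_. {..<k}). monom (Poly_Mapping.single (tm m \<sigma> f) 1) (sum f {0..<m}))"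
      by (rule sum.cong[OF refl]) (simp add: prod_monom var_def prod_single tm_def)
    finally show "signof \<sigma> * (\<Prod>i = 0..<m. (Xmat m k :: 'a mpoly poly mat) $$ (i, \<sigma> i)) = signof \<sigma> *
      (\<Sum>f\<in>PiE {0..<m} (\<lambda>_. {..<k}). monom (Poly_Mapping.single (tm m \<sigma> f) 1) (sum f {0..<m}))" by simp
  qed
  finally have d: "det (Xmat m k) = \<dots>" .
  have "coeff (det (Xmat m k) :: 'a mpoly poly) l = (\<Sum>\<sigma>\<in>Perms m. signof \<sigma> *
      (\<Sum>f\<in>PiE {0..<m} (\<lambda>_. {..<k}). (if sum f {0..<m} = l then Poly_Mapping.single (tm m \<sigma> f) 1 else 0)))"
    unfolding d by (simp add: coeff_sum coeff_signof)
  also have "\<dots> = (\<Sum>\<sigma>\<in>Perms m. \<Sum>f\<in>Fset m k l. signof \<sigma> * Poly_Mapping.single (tm m \<sigma> f) 1)"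
  proof (rule sum.cong[OF refl])
    fix \<sigma>
    have "(\<Sum>f\<in>PiE {0..<m} (\<lambda>_. {..<k}). (if sum f {0..<m} = l then Poly_Mapping.single (tm m \<sigma> f) 1 else 0))
        = (\<Sum>f\<in>Fset m k l. Poly_Mapping.single (tm m \<sigma> f) (1::'a))"
      unfolding Fset_def by (rule sum.inter_filter[symmetric]) (simp add: finite_PiE)
    then show "signof \<sigma> * (\<Sum>f\<in>PiE {0..<m} (\<lambda>_. {..<k}). (if sum f {0..<m} = l then Poly_Mapping.single (tm m \<sigma> f) 1 else 0))
        = (\<Sum>f\<in>Fset m k l. signof \<sigma> * Poly_Mapping.single (tm m \<sigma> f) (1::'a))"
      by (simp add: sum_distrib_left)
  qed
  finally show ?thesis .
qed


lemma modinj: assumes "(i + l) mod m = (j + l) mod m" "i < (m::nat)" "j < m" shows "i = j"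
proof -
  have "(int i + int l) mod int m = (int j + int l) mod int m"
    using assms(1) by (metis of_nat_add of_nat_mod)
  then have d: "int m dvd (int i + int l) - (int j + int l)"
    using mod_eq_dvd_iff by blast
  show ?thesis
  proof (rule ccontr)
    assume "i \<noteq> j"
    then consider "i < j" | "j < i" by linarith
    then show False
    proof cases
      case 1
      have "int m dvd int j - int i" using d by (metis dvd_minus_iff minus_diff_eq add_diff_cancel_right)
      then have "int m \<le> int j - int i" using 1 by (intro zdvd_imp_le) auto
      then show False using assms 1 by linarith
    next
      case 2
      have "int m dvd int i - int j" using d by simp
      then have "int m \<le> int i - int j" using 2 by (intro zdvd_imp_le) auto
      then show False using assms 2 by linarith
    qed
  qed
qed

definition ew :: "nat \<Rightarrow> (nat \<times> nat \<times> nat) \<Rightarrow> int" where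
  "ew m v = (case v of (i, j, a) \<Rightarrow> (int m * int a + int j - int i)^2)"

definition cost :: "nat \<Rightarrow> mon \<Rightarrow> int" where
  "cost m = lin (ew m)"

definition ev :: "nat \<Rightarrow> (nat \<Rightarrow> nat) \<Rightarrow> (nat \<Rightarrow> nat) \<Rightarrow> nat \<Rightarrow> int" where
  "ev m \<sigma> f i = int m * int (f i) + int (\<sigma> i) - int i"

lemma cost_add: "cost m (\<alpha> + \<beta>) = cost m \<alpha> + cost m \<beta>"
  by (simp add: cost_def lin_add)

lemma cost_tm: "cost m (tm m \<sigma> f) = (\<Sum>i\<in>{0..<m}. (ev m \<sigma> f i)^2)"
  by (simp add: cost_def tm_def lin_sum ew_def ev_def)

lemma sum_ev:
  assumes "\<sigma> permutes {0..<m}"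
  shows "(\<Sum>i\<in>{0..<m}. ev m \<sigma> f i) = int m * int (\<Sum>i\<in>{0..<m}. f i)"
proof -
  have p: "(\<Sum>i\<in>{0..<m}. int (\<sigma> i)) = (\<Sum>i\<in>{0..<m}. int i)"
    using sum.permute[OF assms, of int] by (simp add: comp_def)
  show ?thesis
    by (simp add: ev_def sum.distrib sum_subtractf p sum_distrib_left)
qed

lemma sq_dev:
  fixes x :: "nat \<Rightarrow> int"
  assumes "(\<Sum>i\<in>I. x i) = int (card I) * c"
  shows "(\<Sum>i\<in>I. (x i)^2) = int (card I) * c^2 + (\<Sum>i\<in>I. (x i - c)^2)"
proof -
  have "(\<Sum>i\<in>I. (x i - c)^2) = (\<Sum>i\<in>I. (x i)^2 - (2 * c) * x i + c^2)"
    by (rule sum.cong) (simp_all add: power2_eq_square algebra_simps)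
  also have "\<dots> = (\<Sum>i\<in>I. (x i)^2) - (\<Sum>i\<in>I. (2 * c) * x i) + (\<Sum>i\<in>I. c^2)"
    by (simp add: sum.distrib sum_subtractf)
  also have "\<dots> = (\<Sum>i\<in>I. (x i)^2) - 2 * c * (\<Sum>i\<in>I. x i) + int (card I) * c^2"
    by (simp add: sum_distrib_left)
  finally have "(\<Sum>i\<in>I. (x i - c)^2) = (\<Sum>i\<in>I. (x i)^2) - 2 * c * (\<Sum>i\<in>I. x i) + int (card I) * c^2" .
  then show ?thesis using assms by (simp add: power2_eq_square algebra_simps)
qed

lemma cost_tm_ge:
  assumes "\<sigma> permutes {0..<m}" "sum f {0..<m} = l"
  shows "cost m (tm m \<sigma> f) = int m * int l ^ 2 + (\<Sum>i\<in>{0..<m}. (ev m \<sigma> f i - int l)^2)"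
proof -
  have "(\<Sum>i\<in>{0..<m}. ev m \<sigma> f i) = int (card {0..<m}) * int l"
    using sum_ev[OF assms(1), of f] assms(2) by simp
  from sq_dev[OF this] show ?thesis by (simp add: cost_tm)
qed

definition sig :: "nat \<Rightarrow> nat \<Rightarrow> nat \<Rightarrow> nat" where
  "sig m l = (\<lambda>i. if i < m then (i + l) mod m else i)"

definition fl :: "nat \<Rightarrow> nat \<Rightarrow> nat \<Rightarrow> nat" where
  "fl m l = (\<lambda>i. if i < m then (i + l) div m else undefined)"

lemma sig_permutes: "sig m l permutes {0..<m}"
proof -
  have "bij_betw (\<lambda>i. (i + l) mod m) {0..<m} {0..<m}"
  proof (cases "m = 0")
    case True then show ?thesis by (simp add: bij_betw_def)
  next
    case False
    have inj: "inj_on (\<lambda>i. (i + l) mod m) {0..<m}"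
      by (rule inj_onI) (auto intro: modinj)
    moreover have "(\<lambda>i. (i + l) mod m) ` {0..<m} \<subseteq> {0..<m}" using False by auto
    ultimately have "(\<lambda>i. (i + l) mod m) ` {0..<m} = {0..<m}"
      by (intro endo_inj_surj) auto
    then show ?thesis using inj by (simp add: bij_betw_def)
  qed
  from permutes_restrict_id[OF this] show ?thesis
    by (simp add: restrict_id_def sig_def)
qed

lemma ev_sig: "i < m \<Longrightarrow> ev m (sig m l) (fl m l) i = int l"
proof -
  assume i: "i < m"
  have "m * ((i + l) div m) + (i + l) mod m = i + l" by simp
  then have "int m * int ((i + l) div m) + int ((i + l) mod m) = int i + int l"
    by (metis of_nat_add of_nat_mult)
  then show ?thesis using i by (simp add: ev_def sig_def fl_def)
qed

lemma sum_fl: "0 < m \<Longrightarrow> (\<Sum>i\<in>{0..<m}. fl m l i) = l"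
proof -
  assume m: "0 < m"
  have "int m * int (\<Sum>i\<in>{0..<m}. fl m l i) = (\<Sum>i\<in>{0..<m}. ev m (sig m l) (fl m l) i)"
    using sum_ev[OF sig_permutes] by simp
  also have "\<dots> = (\<Sum>i\<in>{0..<m}. int l)" by (rule sum.cong) (auto simp: ev_sig)
  also have "\<dots> = int m * int l" by simp
  finally have "int (\<Sum>i\<in>{0..<m}. fl m l i) = int l" using m by simp
  then show ?thesis by (metis of_nat_eq_iff)
qed

lemma fl_lt: "l < (k::nat) \<Longrightarrow> i < m \<Longrightarrow> (i + l) div m < k"
proof -
  assume l: "l < k" and i: "i < m"
  have "i + l < k * m"
  proof -
    have "i + l \<le> (m - 1) + (k - 1)" using l i by linarith
    also have "\<dots> < k * m" using l i
      by (cases m; cases k) (auto simp: algebra_simps)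
    finally show ?thesis .
  qed
  then show ?thesis by (rule less_mult_imp_div_less)
qed

lemma fl_Fset: "l < k \<Longrightarrow> 0 < m \<Longrightarrow> fl m l \<in> Fset m k l"
  unfolding Fset_def by (auto simp: sum_fl fl_lt PiE_def extensional_def) (auto simp: fl_def fl_lt)

lemma ev_eq_imp:
  assumes s: "\<sigma> permutes {0..<m}" and f: "f \<in> PiE {0..<m} (\<lambda>_. {..<k})"
    and e: "\<And>i. i < m \<Longrightarrow> ev m \<sigma> f i = int l"
  shows "\<sigma> = sig m l \<and> f = fl m l"
proof -
  have *: "\<sigma> i = (i + l) mod m \<and> f i = (i + l) div m" if i: "i < m" for i
  proof -
    have "int m * int (f i) + int (\<sigma> i) = int i + int l" using e[OF i] by (simp add: ev_def)
    then have eq: "m * f i + \<sigma> i = i + l" by (metis of_nat_add of_nat_eq_iff of_nat_mult)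
    have si: "\<sigma> i < m" using permutes_in_image[OF s] i by auto
    have "(i + l) mod m = \<sigma> i"
      by (rule mod_nat_eqI) (use si eq in \<open>auto, metis add_diff_cancel_right' dvd_triv_left\<close>)
    moreover have "(i + l) div m = f i"
      by (rule div_nat_eqI) (use si eq in auto)
    ultimately show ?thesis by simp
  qed
  have "\<sigma> = sig m l"
  proof
    fix i show "\<sigma> i = sig m l i"
      using * permutes_not_in[OF s, of i] by (cases "i < m") (auto simp: sig_def)
  qed
  moreover have "f = fl m l"
  proof
    fix i show "f i = fl m l i"
      using * f by (cases "i < m") (auto simp: fl_def PiE_def extensional_def)
  qed
  ultimately show ?thesis ..
qed

lemma cost_tm_strict:
  assumes s: "\<sigma> permutes {0..<m}" and f: "f \<in> Fset m k l"
    and ne: "(\<sigma>, f) \<noteq> (sig m l, fl m l)"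
  shows "cost m (tm m \<sigma> f) > int m * int l ^ 2"
proof -
  have fs: "sum f {0..<m} = l" and fp: "f \<in> PiE {0..<m} (\<lambda>_. {..<k})" using f by (auto simp: Fset_def)
  have "\<exists>i<m. ev m \<sigma> f i \<noteq> int l"
    using ev_eq_imp[OF s fp] ne by blast
  then obtain i where i: "i < m" "ev m \<sigma> f i \<noteq> int l" by blast
  have "0 < (ev m \<sigma> f i - int l)^2" using i(2) by simp
  also have "\<dots> \<le> (\<Sum>i\<in>{0..<m}. (ev m \<sigma> f i - int l)^2)"
    by (rule member_le_sum) (use i in auto)
  finally show ?thesis using cost_tm_ge[OF s fs] by simp
qed

definition Lm :: "nat \<Rightarrow> nat \<Rightarrow> mon" where
  "Lm m l = tm m (sig m l) (fl m l)"

lemma cost_Lm: "cost m (Lm m l) = int m * int l ^ 2"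
  using cost_tm_ge[where \<sigma>="sig m l" and m=m and f="fl m l" and l=l] sig_permutes[of m l] sum_fl[of m l]
  by (cases "m = 0") (auto simp: Lm_def ev_sig tm_def cost_def)

definition bv :: "nat \<Rightarrow> nat \<Rightarrow> nat \<Rightarrow> nat \<times> nat \<times> nat" where
  "bv m l i = (i, (i + l) mod m, (i + l) div m)"

definition Blk :: "nat \<Rightarrow> nat \<Rightarrow> (nat \<times> nat \<times> nat) set" where
  "Blk m l = bv m l ` {0..<m}"

lemma inj_bv: "inj_on (bv m l) A"
  by (rule inj_onI) (simp add: bv_def)

lemma card_Blk: "card (Blk m l) = m"
  by (simp add: Blk_def card_image inj_bv)

lemma finite_Blk [simp]: "finite (Blk m l)"
  by (simp add: Blk_def)

lemma Lm_eq: "Lm m l = (\<Sum>v\<in>Blk m l. Poly_Mapping.single v 1)"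
proof -
  have "Lm m l = (\<Sum>i\<in>{0..<m}. Poly_Mapping.single (bv m l i) 1)"
    by (simp add: Lm_def tm_def sig_def fl_def bv_def)
  also have "\<dots> = (\<Sum>v\<in>Blk m l. Poly_Mapping.single v 1)"
    unfolding Blk_def by (rule sum.reindex[symmetric, unfolded comp_def]) (rule inj_bv)
  finally show ?thesis .
qed

lemma lookup_Lm: "lookup (Lm m l) v = (if v \<in> Blk m l then 1 else 0)"
proof -
  have "lookup (Lm m l) v = (\<Sum>w\<in>Blk m l. (1 when w = v))"
    by (simp add: Lm_eq lookup_sum lookup_single)
  also have "\<dots> = (if v \<in> Blk m l then 1 else 0)"
    by (simp add: when_def)
  finally show ?thesis .
qed

lemma keys_Lm: "keys (Lm m l) = Blk m l"
  by (auto simp: in_keys_iff lookup_Lm split: if_splits)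

lemma mon_deg_Lm: "mon_deg (Lm m l) = m"
  by (simp add: Lm_eq mon_deg_sum card_Blk)

lemma Blk_Vset: "l < k \<Longrightarrow> Blk m l \<subseteq> Vset m k"
  by (auto simp: Blk_def bv_def Vset_def fl_lt)

lemma Lm_Mon: "l < k \<Longrightarrow> Lm m l \<in> Mon m k m"
  by (simp add: Mon_def mon_deg_Lm keys_Lm Blk_Vset)

lemma Blk_disj: "l \<noteq> l' \<Longrightarrow> Blk m l \<inter> Blk m l' = {}"
proof (rule ccontr)
  assume ne: "l \<noteq> l'" and "Blk m l \<inter> Blk m l' \<noteq> {}"
  then obtain v where "v \<in> Blk m l" "v \<in> Blk m l'" by blast
  then obtain i i' where "bv m l i = bv m l' i'" unfolding Blk_def by blast
  then have "i = i'" "(i + l) mod m = (i + l') mod m" "(i + l) div m = (i + l') div m"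
    by (auto simp: bv_def)
  then have "i + l = i + l'" by (metis div_mult_mod_eq)
  with ne show False by simp
qed

lemma tm_Mon:
  assumes s: "\<sigma> permutes {0..<m}" and f: "f \<in> Fset m k l"
  shows "tm m \<sigma> f \<in> Mon m k m"
proof -
  have fp: "f \<in> PiE {0..<m} (\<lambda>_. {..<k})" using f by (auto simp: Fset_def)
  have "keys (tm m \<sigma> f) \<subseteq> Vset m k"
    unfolding tm_def using keys_sum_nat[of "{0..<m}" "\<lambda>i. Poly_Mapping.single (i, \<sigma> i, f i) (1::nat)"]
      permutes_in_image[OF s] fp
    by (auto simp: Vset_def PiE_def Pi_def)
  moreover have "mon_deg (tm m \<sigma> f) = m" by (simp add: tm_def mon_deg_sum)
  ultimately show ?thesis by (simp add: Mon_def)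
qed

lemma signof_single: "(signof \<sigma> :: 'a::comm_ring_1 mpoly) * Poly_Mapping.single \<beta> 1 = Poly_Mapping.single \<beta> (signof \<sigma>)"
  by (cases \<sigma> rule: sign_cases) (simp_all add: single_uminus)



definition G :: "nat \<Rightarrow> nat \<Rightarrow> nat \<Rightarrow> 'a::comm_ring_1 mpoly" where
  "G m k l = coeff (det (Xmat m k)) l"

lemma G_sum: "G m k l = (\<Sum>p\<in>Perms m \<times> Fset m k l. Poly_Mapping.single (tm m (fst p) (snd p)) (signof (fst p)))"
  unfolding G_def g_expand signof_single by (simp add: sum.cartesian_product split_def)

lemma finite_Perms: "finite (Perms m)"
  unfolding Perms_def by (rule finite_permutations) simp

lemma finite_Fset: "finite (Fset m k l)"
  unfolding Fset_def by (simp add: finite_PiE)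

lemma keys_G: "keys (G m k l :: 'a::comm_ring_1 mpoly) \<subseteq> (\<lambda>p. tm m (fst p) (snd p)) ` (Perms m \<times> Fset m k l)"
proof -
  have "keys (G m k l :: 'a mpoly) \<subseteq> (\<Union>p\<in>Perms m \<times> Fset m k l. keys (Poly_Mapping.single (tm m (fst p) (snd p)) (signof (fst p) :: 'a)))"
    unfolding G_sum by (rule keys_sum)
  also have "\<dots> \<subseteq> (\<lambda>p. tm m (fst p) (snd p)) ` (Perms m \<times> Fset m k l)"
    by auto
  finally show ?thesis .
qed

lemma G_Mon: "keys (G m k l :: 'a::comm_ring_1 mpoly) \<subseteq> Mon m k m"
  using keys_G[where 'a='a, of m k l] tm_Mon by (fastforce simp: Perms_def)

lemma G_low:
  assumes "\<beta> \<in> keys (G m k l :: 'a::comm_ring_1 mpoly)" "\<beta> \<noteq> Lm m l"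
  shows "cost m \<beta> > cost m (Lm m l)"
proof -
  obtain \<sigma> f where sf: "\<sigma> \<in> Perms m" "f \<in> Fset m k l" "\<beta> = tm m \<sigma> f"
    using keys_G[where 'a='a, of m k l] assms(1) by auto
  have "(\<sigma>, f) \<noteq> (sig m l, fl m l)" using sf(3) assms(2) by (auto simp: Lm_def)
  from cost_tm_strict[OF _ sf(2) this] sf(1) show ?thesis
    by (simp add: Perms_def sf(3) cost_Lm)
qed

lemma G_lead:
  assumes m: "0 < m" and l: "l < k"
  shows "lookup (G m k l :: 'a::comm_ring_1 mpoly) (Lm m l) = signof (sig m l)"
proof -
  let ?P = "Perms m \<times> Fset m k l"
  let ?p0 = "(sig m l, fl m l)"
  let ?h = "\<lambda>p. (signof (fst p) :: 'a) when tm m (fst p) (snd p) = Lm m l"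
  have p0: "?p0 \<in> ?P" using fl_Fset[OF l m] sig_permutes by (auto simp: Perms_def)
  have fin: "finite ?P" by (simp add: finite_Perms finite_Fset)
  have "lookup (G m k l :: 'a mpoly) (Lm m l) = (\<Sum>p\<in>?P. ?h p)"
    by (simp add: G_sum lookup_sum lookup_single)
  also have "\<dots> = ?h ?p0 + (\<Sum>p\<in>?P - {?p0}. ?h p)"
    by (rule sum.remove[OF fin p0])
  also have "(\<Sum>p\<in>?P - {?p0}. ?h p) = 0"
  proof (rule sum.neutral, rule ballI)
    fix p assume p: "p \<in> ?P - {?p0}"
    obtain \<sigma> f where pe: "p = (\<sigma>, f)" by (cases p)
    have "cost m (tm m \<sigma> f) > int m * int l ^ 2"
      using cost_tm_strict[of \<sigma> m f k l] p pe by (auto simp: Perms_def)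
    then have "tm m \<sigma> f \<noteq> Lm m l" using cost_Lm[of m l] by auto
    then show "?h p = 0" using pe by simp
  qed
  finally show ?thesis by (simp add: Lm_def)
qed

lemma signof_nz: "(signof \<sigma> :: 'a::field) \<noteq> 0"
  by (cases \<sigma> rule: sign_cases) simp_all



lemma finite_cost_induct:
  fixes c :: "'b \<Rightarrow> int"
  assumes fin: "finite S"
    and step: "\<And>x. x \<in> S \<Longrightarrow> (\<And>y. y \<in> S \<Longrightarrow> c y > c x \<Longrightarrow> P y) \<Longrightarrow> P x"
  shows "x \<in> S \<Longrightarrow> P x"
proof (induction "card {y\<in>S. c y > c x}" arbitrary: x rule: less_induct)
  case less
  show ?case
  proof (rule step[OF less.prems])
    fix y assume y: "y \<in> S" "c y > c x"
    have "{z\<in>S. c z > c y} \<subset> {z\<in>S. c z > c x}" using y by auto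
    then have "card {z\<in>S. c z > c y} < card {z\<in>S. c z > c x}"
      by (rule psubset_card_mono[rotated]) (use fin in auto)
    then show "P y" using less.hyps y(1) by blast
  qed
qed

lemma Mon_add: "\<alpha> \<in> Mon m k d \<Longrightarrow> \<beta> \<in> Mon m k e \<Longrightarrow> \<alpha> + \<beta> \<in> Mon m k (d + e)"
  by (auto simp: Mon_def mon_deg_add keys_add_nat)

lemma Mon_add_rev: "\<alpha> + \<beta> \<in> Mon m k (d + e) \<Longrightarrow> \<beta> \<in> Mon m k e \<Longrightarrow> \<alpha> \<in> Mon m k d"
  by (auto simp: Mon_def mon_deg_add keys_add_nat)

lemma Lm_split:
  assumes "Blk m j \<subseteq> keys \<alpha>"
  shows "\<alpha> = (\<alpha> - Lm m j) + Lm m j" and "keys (\<alpha> - Lm m j) \<subseteq> keys \<alpha>"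
proof -
  show "\<alpha> = (\<alpha> - Lm m j) + Lm m j"
  proof (rule poly_mapping_eqI)
    fix v
    show "lookup \<alpha> v = lookup (\<alpha> - Lm m j + Lm m j) v"
      using assms by (auto simp: lookup_add lookup_minus lookup_Lm in_keys_iff)
  qed
  show "keys (\<alpha> - Lm m j) \<subseteq> keys \<alpha>"
    by (auto simp: in_keys_iff lookup_minus)
qed

lemma mscale_mult_left: "mscale a p * q = mscale a (p * q)"
  by (simp add: mscale_conv mult.assoc)

lemma mscale_mult_right: "p * mscale a q = mscale a (p * q)"
  by (simp add: mscale_conv mult.left_commute)

lemma mult_expand:
  "(p :: 'a::field mpoly) * q = (\<Sum>\<nu>\<in>keys p. mscale (lookup p \<nu>) (Poly_Mapping.single \<nu> 1 * q))"
proof -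
  have "p * q = (\<Sum>\<nu>\<in>keys p. mscale (lookup p \<nu>) (Poly_Mapping.single \<nu> (1::'a))) * q"
    by (subst poly_expand_mscale) simp
  also have "\<dots> = (\<Sum>\<nu>\<in>keys p. mscale (lookup p \<nu>) (Poly_Mapping.single \<nu> 1 * q))"
    by (simp add: sum_distrib_right mscale_mult_left)
  finally show ?thesis .
qed

lemma subspace_keys: "MS.subspace {p :: 'a::field mpoly. keys p \<subseteq> B}"
proof -
  have k1: "\<And>x y :: 'a mpoly. keys (x+y) \<subseteq> keys x \<union> keys y" by (rule keys_add)
  have k2: "\<And>c (x :: 'a mpoly). keys (mscale c x) \<subseteq> keys x" by (auto simp: in_keys_iff)
  have k0: "keys (0::'a mpoly) \<subseteq> B" by simp
  have k3: "\<And>x y :: 'a mpoly. keys x \<subseteq> B \<Longrightarrow> keys y \<subseteq> B \<Longrightarrow> keys (x+y) \<subseteq> B" using k1 by blast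
  have k4: "\<And>c (x :: 'a mpoly). keys x \<subseteq> B \<Longrightarrow> keys (mscale c x) \<subseteq> B" using k2 by blast
  show ?thesis unfolding MS.subspace_def mem_Collect_eq using k0 k3 k4 by blast
qed

lemma ideal_ext:
  assumes "finite A" "finite B" 
  shows "(\<Sum>g\<in>A. c g * g) = (\<Sum>g\<in>A \<union> B. (if g \<in> A then c g else 0) * (g :: 'b::comm_ring_1))"
proof -
  have "(\<Sum>g\<in>A \<union> B. (if g \<in> A then c g else 0) * g) = (\<Sum>g\<in>A \<union> B. if g \<in> A then c g * g else 0)"
    by (rule sum.cong) auto
  also have "\<dots> = (\<Sum>g\<in>(A \<union> B) \<inter> A. c g * g)"
    by (rule sum.inter_restrict[symmetric]) (use assms in auto)
  also have "(A \<union> B) \<inter> A = A" by auto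
  finally show ?thesis by simp
qed

lemma ideal_subspace: "MS.subspace (ideal_gen (S :: 'a::field mpoly set))"
  unfolding MS.subspace_def
proof (intro conjI ballI allI)
  show "0 \<in> ideal_gen S" unfolding ideal_gen_def by (rule CollectI, rule exI[of _ "{}"]) auto
next
  fix x y assume x: "x \<in> ideal_gen S" and y: "y \<in> ideal_gen S"
  obtain A c where A: "finite A" "A \<subseteq> S" "x = (\<Sum>g\<in>A. c g * g)" using x unfolding ideal_gen_def by blast
  obtain B d where B: "finite B" "B \<subseteq> S" "y = (\<Sum>g\<in>B. d g * g)" using y unfolding ideal_gen_def by blast
  have "x + y = (\<Sum>g\<in>A \<union> B. ((if g \<in> A then c g else 0) + (if g \<in> B then d g else 0)) * g)"
    using ideal_ext[OF A(1) B(1), of c] ideal_ext[OF B(1) A(1), of d]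
    by (simp add: A(3) B(3) distrib_right sum.distrib Un_commute)
  then show "x + y \<in> ideal_gen S" unfolding ideal_gen_def
    by (intro CollectI exI[of _ "A \<union> B"] exI[of _ "\<lambda>g. (if g \<in> A then c g else 0) + (if g \<in> B then d g else 0)"]) (use A B in auto)
next
  fix a x assume x: "x \<in> ideal_gen S"
  obtain A c where A: "finite A" "A \<subseteq> S" "x = (\<Sum>g\<in>A. c g * g)" using x unfolding ideal_gen_def by blast
  have "mscale a x = (\<Sum>g\<in>A. (Poly_Mapping.single 0 a * c g) * g)"
    by (simp add: A(3) mscale_conv sum_distrib_left mult.assoc)
  then show "mscale a x \<in> ideal_gen S" unfolding ideal_gen_def
    by (intro CollectI exI[of _ A] exI[of _ "\<lambda>g. Poly_Mapping.single 0 a * c g"]) (use A in auto)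
qed

lemma ideal_mem: "g \<in> S \<Longrightarrow> c * g \<in> ideal_gen S"
  unfolding ideal_gen_def by (rule CollectI, rule exI[of _ "{g}"], rule exI[of _ "\<lambda>_. c"]) auto

lemma det_coeffs_eq: "det_coeffs m k = G m k ` {..<k}"
  by (auto simp: det_coeffs_def G_def)

definition Idx :: "nat \<Rightarrow> nat \<Rightarrow> nat \<Rightarrow> (nat \<times> mon) set" where
  "Idx m k d = {(l, \<mu>). l < k \<and> \<mu> \<in> Mon m k d \<and> (\<forall>j<l. \<not> Blk m j \<subseteq> keys \<mu>)}"

definition hT :: "nat \<Rightarrow> nat \<Rightarrow> nat \<times> mon \<Rightarrow> 'a::comm_ring_1 mpoly" where
  "hT m k = (\<lambda>(l, \<mu>). Poly_Mapping.single \<mu> 1 * G m k l)"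

lemma single_G_hom:
  assumes "\<mu> \<in> Mon m k d"
  shows "keys (Poly_Mapping.single \<mu> 1 * (G m k l :: 'a::comm_ring_1 mpoly)) \<subseteq> Mon m k (d + m)"
  using keys_single_mult[of \<mu> "G m k l :: 'a mpoly"] G_Mon[where 'a='a, of m k l] Mon_add[OF assms]
  by blast

lemma lead_nz:
  assumes "0 < m" "l < k"
  shows "lookup (G m k l :: 'a::field mpoly) (Lm m l) \<noteq> 0"
  by (simp add: G_lead[OF assms] signof_nz)

lemma spanning:
  assumes m: "0 < m"
  shows "l < k \<Longrightarrow> \<mu> \<in> Mon m k d \<Longrightarrow>
    Poly_Mapping.single \<mu> 1 * (G m k l :: 'a::field mpoly) \<in> MS.span (hT m k ` Idx m k d)"
proof (induction l arbitrary: \<mu> rule: less_induct)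
  case (less l)
  let ?S = "MS.span (hT m k ` Idx m k d) :: 'a mpoly set"
  show ?case
  proof (rule finite_cost_induct[where c="cost m" and S="Mon m k d", OF finite_Mon _ less.prems(2)])
    fix \<mu> assume mu: "\<mu> \<in> Mon m k d"
      and IH2: "\<And>\<nu>. \<nu> \<in> Mon m k d \<Longrightarrow> cost m \<nu> > cost m \<mu> \<Longrightarrow> Poly_Mapping.single \<nu> 1 * G m k l \<in> ?S"
    show "Poly_Mapping.single \<mu> 1 * G m k l \<in> ?S"
    proof (cases "\<forall>j<l. \<not> Blk m j \<subseteq> keys \<mu>")
      case True
      then have "(l, \<mu>) \<in> Idx m k d" using less.prems mu by (simp add: Idx_def)
      then show ?thesis by (intro MS.span_base) (force simp: hT_def)
    next
      case False
      then obtain j where j: "j < l" "Blk m j \<subseteq> keys \<mu>" by blast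
      have jk: "j < k" using j less.prems by simp
      define \<mu>' where "\<mu>' = \<mu> - Lm m j"
      have mu_eq: "\<mu> = \<mu>' + Lm m j" using Lm_split(1)[OF j(2)] by (simp add: \<mu>'_def)
      have dm: "mon_deg \<mu>' + m = d" using mu mu_eq mon_deg_add[of \<mu>' "Lm m j"] by (simp add: Mon_def mon_deg_Lm)
      have mu'M: "\<mu>' \<in> Mon m k (d - m)"
        using mu Lm_split(2)[OF j(2)] dm by (auto simp: Mon_def \<mu>'_def)
      have dm2: "d - m + m = d" using dm by simp
      define \<epsilon> where "\<epsilon> = lookup (G m k j :: 'a mpoly) (Lm m j)"
      have eps: "\<epsilon> \<noteq> 0" using lead_nz[OF m jk] by (simp add: \<epsilon>_def)
      define r where "r = (G m k j :: 'a mpoly) - Poly_Mapping.single (Lm m j) \<epsilon>"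
      have keys_r: "keys r \<subseteq> keys (G m k j :: 'a mpoly) - {Lm m j}"
        by (auto simp: r_def in_keys_iff lookup_minus lookup_single \<epsilon>_def when_def split: if_splits)
      have sLm: "Poly_Mapping.single (Lm m j) (1::'a) = mscale (inverse \<epsilon>) (G m k j - r)"
        by (rule poly_mapping_eqI) (simp add: r_def lookup_single when_def eps)
      have "Poly_Mapping.single \<mu> (1::'a) = Poly_Mapping.single \<mu>' 1 * Poly_Mapping.single (Lm m j) 1"
        by (simp add: mu_eq mult_single)
      then have "Poly_Mapping.single \<mu> 1 * (G m k l :: 'a mpoly) = Poly_Mapping.single \<mu>' 1 * Poly_Mapping.single (Lm m j) 1 * G m k l"
        by simp
      also have "\<dots> = Poly_Mapping.single \<mu>' 1 * mscale (inverse \<epsilon>) (G m k j - r) * G m k l"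
        by (simp only: sLm)
      also have "\<dots> = mscale (inverse \<epsilon>) (Poly_Mapping.single \<mu>' 1 * (G m k j - r) * G m k l)"
        by (simp only: mscale_mult_left mscale_mult_right)
      also have "Poly_Mapping.single \<mu>' 1 * (G m k j - r) * G m k l
          = (Poly_Mapping.single \<mu>' 1 * G m k l) * G m k j - (Poly_Mapping.single \<mu>' 1 * r) * G m k l"
        by (simp add: algebra_simps)
      finally have "Poly_Mapping.single \<mu> 1 * G m k l =
          mscale (inverse \<epsilon>) ((Poly_Mapping.single \<mu>' 1 * G m k l) * G m k j - (Poly_Mapping.single \<mu>' 1 * r) * G m k l)" .
      moreover have "(Poly_Mapping.single \<mu>' 1 * G m k l) * G m k j \<in> ?S"
      proof -
        let ?p = "Poly_Mapping.single \<mu>' 1 * (G m k l :: 'a mpoly)"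
        have kp: "keys ?p \<subseteq> Mon m k d" using single_G_hom[OF mu'M, where 'a='a, of l] dm2 by simp
        show ?thesis
          by (subst mult_expand, intro MS.span_sum MS.span_scale less.IH[OF j(1) jk]) (use kp in auto)
      qed
      moreover have "(Poly_Mapping.single \<mu>' 1 * r) * G m k l \<in> ?S"
      proof -
        let ?q = "Poly_Mapping.single \<mu>' 1 * r"
        have kq: "\<nu> \<in> Mon m k d \<and> cost m \<nu> > cost m \<mu>" if nu: "\<nu> \<in> keys ?q" for \<nu>
        proof -
          obtain \<beta> where b: "\<beta> \<in> keys r" "\<nu> = \<mu>' + \<beta>" using keys_single_mult[of \<mu>' r] nu by auto
          have bG: "\<beta> \<in> keys (G m k j :: 'a mpoly)" "\<beta> \<noteq> Lm m j" using keys_r b(1) by auto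
          have "\<beta> \<in> Mon m k m" using G_Mon[where 'a='a] bG(1) by blast
          then have "\<nu> \<in> Mon m k d" using Mon_add[OF mu'M] b(2) dm2 by metis
          moreover have "cost m \<beta> > cost m (Lm m j)" by (rule G_low[OF bG])
          then have "cost m \<nu> > cost m \<mu>" using b(2) mu_eq by (simp add: cost_add)
          ultimately show ?thesis by simp
        qed
        show ?thesis
          by (subst mult_expand, intro MS.span_sum MS.span_scale IH2) (use kq in auto)
      qed
      ultimately show ?thesis by (simp add: MS.span_diff MS.span_scale)
    qed
  qed
qed



lemma restr_mult:
  assumes q: "keys (q :: 'a::comm_ring_1 mpoly) \<subseteq> Mon m k e"
  shows "restr (Mon m k (d + e)) (c * q) = restr (Mon m k d) c * q"
proof -
  let ?c1 = "restr (Mon m k d) c" and ?c2 = "restr (- Mon m k d) c"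
  have "c = ?c1 + ?c2" by (rule restr_split)
  then have cq: "c * q = ?c1 * q + ?c2 * q" by (metis distrib_right)
  have k1: "keys (?c1 * q) \<subseteq> Mon m k (d + e)"
  proof
    fix x assume "x \<in> keys (?c1 * q)"
    then obtain a b where ab: "a \<in> keys ?c1" "b \<in> keys q" "x = a + b" using keys_mult by blast
    have "a \<in> Mon m k d" using ab(1) keys_restr by blast
    then show "x \<in> Mon m k (d + e)" using Mon_add ab q by blast
  qed
  have k2: "keys (?c2 * q) \<inter> Mon m k (d + e) = {}"
  proof (rule ccontr)
    assume "keys (?c2 * q) \<inter> Mon m k (d + e) \<noteq> {}"
    then obtain x where x: "x \<in> keys (?c2 * q)" "x \<in> Mon m k (d + e)" by blast
    then obtain a b where ab: "a \<in> keys ?c2" "b \<in> keys q" "x = a + b" using keys_mult by blast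
    have "a \<notin> Mon m k d" using ab(1) keys_restr by blast
    moreover have "a \<in> Mon m k d" using Mon_add_rev x(2) ab q by blast
    ultimately show False by simp
  qed
  show ?thesis
    unfolding cq restr_add restr_id[OF k1] restr_zero[OF k2] by simp
qed

lemma finite_Idx: "finite (Idx m k d)"
proof -
  have "Idx m k d \<subseteq> {..<k} \<times> Mon m k d" by (auto simp: Idx_def)
  then show ?thesis by (rule finite_subset) simp
qed

lemma I_hom_span:
  assumes m: "0 < m"
  shows "I_ideal m k \<inter> hom_part m k (d + m) = MS.span (hT m k ` Idx m k d :: 'a::field mpoly set)"
proof
  show "MS.span (hT m k ` Idx m k d :: 'a mpoly set) \<subseteq> I_ideal m k \<inter> hom_part m k (d + m)"
  proof (rule MS.span_minimal)
    show "hT m k ` Idx m k d \<subseteq> I_ideal m k \<inter> (hom_part m k (d + m) :: 'a mpoly set)"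
    proof
      fix x :: "'a mpoly" assume "x \<in> hT m k ` Idx m k d"
      then obtain l \<mu> where lm: "(l, \<mu>) \<in> Idx m k d" "x = Poly_Mapping.single \<mu> 1 * G m k l"
        by (auto simp: hT_def)
      have "x \<in> I_ideal m k" unfolding I_ideal_def det_coeffs_eq
        using lm by (auto intro!: ideal_mem simp: Idx_def)
      moreover have "x \<in> hom_part m k (d + m)"
        using single_G_hom[of \<mu> m k d l] lm by (auto simp: hom_part_eq Idx_def)
      ultimately show "x \<in> I_ideal m k \<inter> hom_part m k (d + m)" by simp
    qed
    show "MS.subspace (I_ideal m k \<inter> hom_part m k (d + m) :: 'a mpoly set)"
      unfolding I_ideal_def hom_part_eq by (intro MS.subspace_inter ideal_subspace subspace_keys)
  qed
  show "I_ideal m k \<inter> hom_part m k (d + m) \<subseteq> MS.span (hT m k ` Idx m k d :: 'a mpoly set)"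
  proof
    fix f :: "'a mpoly" assume f: "f \<in> I_ideal m k \<inter> hom_part m k (d + m)"
    obtain A c where A: "finite A" "A \<subseteq> det_coeffs m k" "f = (\<Sum>g\<in>A. c g * g)"
      using f unfolding I_ideal_def ideal_gen_def by blast
    have kf: "keys f \<subseteq> Mon m k (d + m)" using f by (simp add: hom_part_eq)
    have "f = restr (Mon m k (d + m)) f" using restr_id[OF kf] by simp
    also have "\<dots> = (\<Sum>g\<in>A. restr (Mon m k (d + m)) (c g * g))" by (simp add: A(3) restr_sum)
    also have "\<dots> \<in> MS.span (hT m k ` Idx m k d)"
    proof (rule MS.span_sum)
      fix g assume g: "g \<in> A"
      then obtain l where l: "l < k" "g = G m k l" using A(2) unfolding det_coeffs_eq by auto
      have "restr (Mon m k (d + m)) (c g * g) = restr (Mon m k d) (c g) * G m k l"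
        using restr_mult[OF G_Mon] l by simp
      also have "\<dots> = (\<Sum>\<mu>\<in>keys (restr (Mon m k d) (c g)).
          mscale (lookup (restr (Mon m k d) (c g)) \<mu>) (Poly_Mapping.single \<mu> 1 * G m k l))"
        by (rule mult_expand)
      also have "\<dots> \<in> MS.span (hT m k ` Idx m k d)"
        by (intro MS.span_sum MS.span_scale spanning[OF m l(1)]) (use keys_restr in blast)
      finally show "restr (Mon m k (d + m)) (c g * g) \<in> MS.span (hT m k ` Idx m k d)" .
    qed
    finally show "f \<in> MS.span (hT m k ` Idx m k d)" .
  qed
qed

definition ltf :: "nat \<Rightarrow> nat \<times> mon \<Rightarrow> mon" where
  "ltf m = (\<lambda>(l, \<mu>). \<mu> + Lm m l)"

lemma keys_Lm_add: "keys (\<mu> + Lm m l) = keys \<mu> \<union> Blk m l"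
  by (simp add: keys_add_nat keys_Lm)

lemma ltf_inj: "inj_on (ltf m) (Idx m k d)"
proof (rule inj_onI)
  fix x y assume x: "x \<in> Idx m k d" and y: "y \<in> Idx m k d" and e: "ltf m x = ltf m y"
  obtain l \<mu> where xe: "x = (l, \<mu>)" by (cases x)
  obtain l' \<mu>' where ye: "y = (l', \<mu>')" by (cases y)
  have e': "\<mu> + Lm m l = \<mu>' + Lm m l'" using e xe ye by (simp add: ltf_def)
  have "l = l'"
  proof (rule ccontr)
    assume ne: "l \<noteq> l'"
    then consider "l < l'" | "l' < l" by linarith
    then show False
    proof cases
      case 1
      have "Blk m l \<subseteq> keys (\<mu>' + Lm m l')" using e' keys_Lm_add[of \<mu> m l] by auto
      then have "Blk m l \<subseteq> keys \<mu>'" using Blk_disj[OF ne] keys_Lm_add[of \<mu>' m l'] by auto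
      then show False using y ye 1 by (auto simp: Idx_def)
    next
      case 2
      have "Blk m l' \<subseteq> keys (\<mu> + Lm m l)" using e' keys_Lm_add[of \<mu>' m l'] by auto
      then have "Blk m l' \<subseteq> keys \<mu>" using Blk_disj[OF ne] keys_Lm_add[of \<mu> m l] by auto
      then show False using x xe 2 by (auto simp: Idx_def)
    qed
  qed
  then show "x = y" using e' xe ye by simp
qed

lemma hT_lead:
  assumes m: "0 < m" and i: "i \<in> Idx m k d"
  shows "lookup (hT m k i :: 'a::field mpoly) (ltf m i) \<noteq> 0"
proof -
  obtain l \<mu> where ie: "i = (l, \<mu>)" by (cases i)
  have l: "l < k" using i ie by (simp add: Idx_def)
  show ?thesis using lead_nz[OF m l, where 'a='a]
    by (simp add: ie hT_def ltf_def lookup_single_mult)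
qed

lemma hT_low:
  assumes "\<beta> \<in> keys (hT m k i :: 'a::comm_ring_1 mpoly)" "\<beta> \<noteq> ltf m i"
  shows "cost m \<beta> > cost m (ltf m i)"
proof -
  obtain l \<mu> where ie: "i = (l, \<mu>)" by (cases i)
  obtain \<gamma> where g: "\<gamma> \<in> keys (G m k l :: 'a mpoly)" "\<beta> = \<mu> + \<gamma>"
    using keys_single_mult[of \<mu> "G m k l :: 'a mpoly"] assms(1) by (auto simp: ie hT_def)
  have "\<gamma> \<noteq> Lm m l" using assms(2) g(2) by (auto simp: ie ltf_def)
  from G_low[OF g(1) this] show ?thesis by (simp add: ie ltf_def g(2) cost_add)
qed

lemma dim_I:
  assumes m: "0 < m"
  shows "MS.dim (I_ideal m k \<inter> hom_part m k (d + m) :: 'a::field mpoly set) = card (Idx m k d)"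
proof -
  have ind: "\<not> MS.dependent (hT m k ` Idx m k d :: 'a mpoly set)"
    apply (rule tri_indep[where lt="ltf m" and C="cost m"])
      apply (rule ltf_inj)
     apply (erule hT_lead[OF m])
    apply (erule (1) hT_low)
    done
  have inj: "inj_on (hT m k :: _ \<Rightarrow> 'a mpoly) (Idx m k d)"
    apply (rule tri_inj[where lt="ltf m" and C="cost m"])
      apply (rule ltf_inj)
     apply (erule hT_lead[OF m])
    apply (erule (1) hT_low)
    done
  have "MS.dim (I_ideal m k \<inter> hom_part m k (d + m) :: 'a mpoly set) = MS.dim (MS.span (hT m k ` Idx m k d :: 'a mpoly set))"
    by (simp only: I_hom_span[OF m])
  also have "\<dots> = card (hT m k ` Idx m k d :: 'a mpoly set)"
    by (rule MS.dim_span_eq_card_independent[OF ind])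
  also have "\<dots> = card (Idx m k d)" by (rule card_image[OF inj])
  finally show ?thesis .
qed

definition NonStd :: "nat \<Rightarrow> nat \<Rightarrow> nat \<Rightarrow> mon set" where
  "NonStd m k n = {\<alpha> \<in> Mon m k n. \<exists>l<k. Blk m l \<subseteq> keys \<alpha>}"

lemma ltf_bij: "bij_betw (ltf m) (Idx m k d) (NonStd m k (d + m))"
  unfolding bij_betw_def
proof (intro conjI ltf_inj)
  show "ltf m ` Idx m k d = NonStd m k (d + m)"
  proof
    show "ltf m ` Idx m k d \<subseteq> NonStd m k (d + m)"
    proof
      fix x assume "x \<in> ltf m ` Idx m k d"
      then obtain l \<mu> where lm: "(l, \<mu>) \<in> Idx m k d" "x = \<mu> + Lm m l" by (auto simp: ltf_def)
      have "x \<in> Mon m k (d + m)" using lm Mon_add Lm_Mon by (auto simp: Idx_def)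
      moreover have "Blk m l \<subseteq> keys x" using lm(2) keys_Lm_add by auto
      ultimately show "x \<in> NonStd m k (d + m)" using lm(1) by (auto simp: NonStd_def Idx_def)
    qed
    show "NonStd m k (d + m) \<subseteq> ltf m ` Idx m k d"
    proof
      fix \<alpha> assume a: "\<alpha> \<in> NonStd m k (d + m)"
      define l0 where "l0 = (LEAST l. l < k \<and> Blk m l \<subseteq> keys \<alpha>)"
      have ex: "\<exists>l. l < k \<and> Blk m l \<subseteq> keys \<alpha>" using a by (auto simp: NonStd_def)
      have l0: "l0 < k" "Blk m l0 \<subseteq> keys \<alpha>" using LeastI_ex[OF ex] by (auto simp: l0_def)
      define \<mu> where "\<mu> = \<alpha> - Lm m l0"
      have ae: "\<alpha> = \<mu> + Lm m l0" using Lm_split(1)[OF l0(2)] by (simp add: \<mu>_def)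
      have km: "keys \<mu> \<subseteq> keys \<alpha>" using Lm_split(2)[OF l0(2)] by (simp add: \<mu>_def)
      have muM: "\<mu> \<in> Mon m k d" using Mon_add_rev[of \<mu> "Lm m l0" m k d m] ae a Lm_Mon[OF l0(1)]
        by (auto simp: NonStd_def)
      have "\<forall>j<l0. \<not> Blk m j \<subseteq> keys \<mu>"
      proof (intro allI impI notI)
        fix j assume j: "j < l0" "Blk m j \<subseteq> keys \<mu>"
        then have "j < k \<and> Blk m j \<subseteq> keys \<alpha>" using l0 km by auto
        then show False using not_less_Least[OF j(1)[unfolded l0_def]] by blast
      qed
      then have "(l0, \<mu>) \<in> Idx m k d" using l0 muM by (simp add: Idx_def)
      then show "\<alpha> \<in> ltf m ` Idx m k d" using ae by (force simp: ltf_def)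
    qed
  qed
qed

lemma hilbert_eq:
  assumes m: "0 < m"
  shows "hilbert_fun TYPE('a::field) m k (d + m) = card (Mon m k (d + m)) - card (NonStd m k (d + m))"
proof -
  have "card (Idx m k d) = card (NonStd m k (d + m))" by (rule bij_betw_same_card[OF ltf_bij])
  then show ?thesis
    unfolding hilbert_fun_def using dim_hom_part[where 'a='a] dim_I[OF m, where 'a='a] by simp
qed



definition Sub :: "(nat \<times> nat \<times> nat) set \<Rightarrow> nat \<Rightarrow> mon set" where
  "Sub A t = {\<beta>. keys \<beta> \<subseteq> A \<and> mon_deg \<beta> = t}"

lemma finite_Sub:
  assumes fin: "finite A"
  shows "finite (Sub A t)"
proof -
  let ?f = "\<lambda>\<alpha>. restrict (lookup \<alpha>) A"
  have "?f ` Sub A t \<subseteq> PiE A (\<lambda>_. {..t})"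
    by (auto simp: Sub_def lookup_le_mon_deg)
  moreover have "inj_on ?f (Sub A t)"
  proof (rule inj_onI)
    fix \<alpha> \<beta> assume a: "\<alpha> \<in> Sub A t" and b: "\<beta> \<in> Sub A t" and e: "?f \<alpha> = ?f \<beta>"
    show "\<alpha> = \<beta>"
    proof (rule poly_mapping_eqI)
      fix v show "lookup \<alpha> v = lookup \<beta> v"
      proof (cases "v \<in> A")
        case True then show ?thesis using e by (metis restrict_apply')
      next
        case False
        have "v \<notin> keys \<alpha>" "v \<notin> keys \<beta>" using a b False by (auto simp: Sub_def)
        then show ?thesis by (simp add: not_in_keys_iff_lookup_eq_zero)
      qed
    qed
  qed
  ultimately show ?thesis
    by (meson finite_PiE fin finite_atMost finite_imageD finite_subset)
qed

lemma Sub_single: "Sub {x} t = {Poly_Mapping.single x t}"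
proof
  show "Sub {x} t \<subseteq> {Poly_Mapping.single x t}"
  proof
    fix \<beta> assume b: "\<beta> \<in> Sub {x} t"
    have "mon_deg \<beta> = lookup \<beta> x" using b mon_deg_superset[of "{x}" \<beta>] by (simp add: Sub_def)
    then have lx: "lookup \<beta> x = t" using b by (simp add: Sub_def)
    have "\<beta> = Poly_Mapping.single x t"
    proof (rule poly_mapping_eqI)
      fix v show "lookup \<beta> v = lookup (Poly_Mapping.single x t) v"
        using b lx by (cases "v = x") (auto simp: Sub_def lookup_single in_keys_iff)
    qed
    then show "\<beta> \<in> {Poly_Mapping.single x t}" by simp
  qed
  show "{Poly_Mapping.single x t} \<subseteq> Sub {x} t" by (auto simp: Sub_def)
qed

lemma Sub_insert:
  assumes x: "x \<notin> A"
  shows "Sub (insert x A) t = (\<Union>j\<in>{..t}. (\<lambda>\<beta>. \<beta> + Poly_Mapping.single x j) ` Sub A (t - j))"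
proof
  show "Sub (insert x A) t \<subseteq> (\<Union>j\<in>{..t}. (\<lambda>\<beta>. \<beta> + Poly_Mapping.single x j) ` Sub A (t - j))"
  proof
    fix \<beta> assume b: "\<beta> \<in> Sub (insert x A) t"
    define j where "j = lookup \<beta> x"
    define \<beta>' where "\<beta>' = \<beta> - Poly_Mapping.single x j"
    have e: "\<beta> = \<beta>' + Poly_Mapping.single x j"
      by (rule poly_mapping_eqI) (auto simp: \<beta>'_def j_def lookup_add lookup_minus lookup_single when_def)
    have k: "keys \<beta>' \<subseteq> A"
    proof
      fix v assume v: "v \<in> keys \<beta>'"
      have vx: "v \<noteq> x" using v by (auto simp: \<beta>'_def j_def in_keys_iff lookup_minus)
      then have "lookup \<beta> v \<noteq> 0" using v by (simp add: \<beta>'_def in_keys_iff lookup_minus lookup_single)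
      then have "v \<in> keys \<beta>" by (simp add: in_keys_iff)
      then have "v \<in> insert x A" using b unfolding Sub_def by blast
      then show "v \<in> A" using vx by simp
    qed
    have "mon_deg \<beta> = mon_deg \<beta>' + j" using e by (metis mon_deg_add mon_deg_single)
    then have "j \<le> t" "mon_deg \<beta>' = t - j" using b by (auto simp: Sub_def)
    then show "\<beta> \<in> (\<Union>j\<in>{..t}. (\<lambda>\<beta>. \<beta> + Poly_Mapping.single x j) ` Sub A (t - j))"
      using e k by (auto simp: Sub_def)
  qed
  show "(\<Union>j\<in>{..t}. (\<lambda>\<beta>. \<beta> + Poly_Mapping.single x j) ` Sub A (t - j)) \<subseteq> Sub (insert x A) t"
    by (auto simp: Sub_def keys_add_nat mon_deg_add split: if_splits)
qed

lemma card_Sub: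
  assumes "finite A" "A \<noteq> {}"
  shows "card (Sub A t) = (card A + t - 1) choose t"
  using assms
proof (induction A arbitrary: t rule: finite_ne_induct)
  case (singleton x)
  then show ?case by (simp add: Sub_single)
next
  case (insert x A)
  have lx: "\<And>\<beta>. \<beta> \<in> Sub A s \<Longrightarrow> lookup \<beta> x = 0" for s
    using insert.hyps(3) by (auto simp: Sub_def in_keys_iff)
  have cA: "card A \<ge> 1" using insert.hyps(1,2) by (simp add: card_gt_0_iff Suc_le_eq)
  have ar: "\<And>j. card A + (t - j) - 1 = card A - 1 + (t - j)" using cA by linarith
  have "card (Sub (insert x A) t) = (\<Sum>j\<in>{..t}. card ((\<lambda>\<beta>. \<beta> + Poly_Mapping.single x j) ` Sub A (t - j)))"
    unfolding Sub_insert[OF insert.hyps(3)]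
  proof (rule card_UN_disjoint)
    show "\<forall>j\<in>{..t}. finite ((\<lambda>\<beta>. \<beta> + Poly_Mapping.single x j) ` Sub A (t - j))"
      using finite_Sub[OF insert.hyps(1)] by blast
    show "\<forall>i\<in>{..t}. \<forall>j\<in>{..t}. i \<noteq> j \<longrightarrow>
        (\<lambda>\<beta>. \<beta> + Poly_Mapping.single x i) ` Sub A (t - i) \<inter> (\<lambda>\<beta>. \<beta> + Poly_Mapping.single x j) ` Sub A (t - j) = {}"
    proof (intro ballI impI)
      fix i j :: nat assume "i \<noteq> j"
      show "(\<lambda>\<beta>. \<beta> + Poly_Mapping.single x i) ` Sub A (t - i) \<inter> (\<lambda>\<beta>. \<beta> + Poly_Mapping.single x j) ` Sub A (t - j) = {}"
      proof (rule ccontr)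
        assume "(\<lambda>\<beta>. \<beta> + Poly_Mapping.single x i) ` Sub A (t - i) \<inter> (\<lambda>\<beta>. \<beta> + Poly_Mapping.single x j) ` Sub A (t - j) \<noteq> {}"
        then obtain \<beta> \<beta>' where bb: "\<beta> \<in> Sub A (t - i)" "\<beta>' \<in> Sub A (t - j)"
          "\<beta> + Poly_Mapping.single x i = \<beta>' + Poly_Mapping.single x j" by blast
        have "lookup (\<beta> + Poly_Mapping.single x i) x = i" using lx[OF bb(1)] by (simp add: lookup_add)
        moreover have "lookup (\<beta>' + Poly_Mapping.single x j) x = j" using lx[OF bb(2)] by (simp add: lookup_add)
        ultimately show False using bb(3) \<open>i \<noteq> j\<close> by simp
      qed
    qed
  qed simp
  also have "\<dots> = (\<Sum>j\<in>{..t}. card (Sub A (t - j)))"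
    by (rule sum.cong[OF refl], rule card_image) (auto intro: inj_onI)
  also have "(\<Sum>j\<in>{..t}. card (Sub A (t - j))) = (\<Sum>j\<in>{..t}. (card A - 1 + (t - j)) choose (t - j))"
    by (rule sum.cong[OF refl]) (simp only: insert.IH ar)
  also have "\<dots> = (\<Sum>i\<in>{..t}. (card A - 1 + i) choose i)"
    using sum.atLeastAtMost_rev[of "\<lambda>i. (card A - 1 + i) choose i" 0 t] by (simp add: atMost_atLeast0)
  also have "\<dots> = Suc (card A - 1 + t) choose t" by (rule sum_choose_lower)
  also have "Suc (card A - 1 + t) = card (insert x A) + t - 1" using cA insert.hyps(1,3) by simp
  finally show ?case .
qed



definition oneA :: "(nat \<times> nat \<times> nat) set \<Rightarrow> mon" where
  "oneA A = (\<Sum>v\<in>A. Poly_Mapping.single v 1)"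

lemma lookup_oneA: "finite A \<Longrightarrow> lookup (oneA A) v = (if v \<in> A then 1 else 0)"
  by (simp add: oneA_def lookup_sum lookup_single when_def)

lemma keys_oneA: "finite A \<Longrightarrow> keys (oneA A) = A"
  by (auto simp: in_keys_iff lookup_oneA split: if_splits)

lemma mon_deg_oneA: "mon_deg (oneA A) = card A"
  by (cases "finite A") (simp_all add: oneA_def mon_deg_sum)

definition Exact :: "(nat \<times> nat \<times> nat) set \<Rightarrow> nat \<Rightarrow> mon set" where
  "Exact A n = {\<alpha>. keys \<alpha> = A \<and> mon_deg \<alpha> = n}"

lemma Exact_sub_Sub: "Exact A n \<subseteq> Sub A n"
  by (auto simp: Exact_def Sub_def)

lemma finite_Exact: "finite A \<Longrightarrow> finite (Exact A n)"
  using finite_subset[OF Exact_sub_Sub finite_Sub] by blast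

lemma mon_deg_ge_card: "finite (keys \<alpha>) \<Longrightarrow> mon_deg \<alpha> \<ge> card (keys \<alpha>)"
proof -
  have "card (keys \<alpha>) = (\<Sum>v\<in>keys \<alpha>. 1)" by simp
  also have "\<dots> \<le> (\<Sum>v\<in>keys \<alpha>. lookup \<alpha> v)"
    by (rule sum_mono) (auto simp: in_keys_iff)
  finally show ?thesis by (simp add: mon_deg_def)
qed

lemma card_Exact:
  assumes A: "finite A" "A \<noteq> {}" and n: "1 \<le> n"
  shows "card (Exact A n) = (n - 1) choose (card A - 1)"
proof (cases "n < card A")
  case True
  have "Exact A n = {}"
  proof (rule ccontr)
    assume "Exact A n \<noteq> {}"
    then obtain \<alpha> where a: "keys \<alpha> = A" "mon_deg \<alpha> = n" by (auto simp: Exact_def)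
    have "card (keys \<alpha>) \<le> mon_deg \<alpha>" by (rule mon_deg_ge_card) simp
    then show False using a True by simp
  qed
  moreover have "n - 1 < card A - 1" using True n by linarith
  ultimately show ?thesis by simp
next
  case False
  have cA: "card A \<ge> 1" using A by (simp add: card_gt_0_iff Suc_le_eq)
  have eq: "Exact A n = (\<lambda>\<beta>. \<beta> + oneA A) ` Sub A (n - card A)"
  proof
    show "Exact A n \<subseteq> (\<lambda>\<beta>. \<beta> + oneA A) ` Sub A (n - card A)"
    proof
      fix \<alpha> assume a: "\<alpha> \<in> Exact A n"
      define \<beta> where "\<beta> = \<alpha> - oneA A"
      have e: "\<alpha> = \<beta> + oneA A"
      proof (rule poly_mapping_eqI)
        fix v
        have "v \<in> A \<Longrightarrow> lookup \<alpha> v \<ge> 1" using a by (auto simp: Exact_def in_keys_iff)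
        then show "lookup \<alpha> v = lookup (\<beta> + oneA A) v"
          by (auto simp: \<beta>_def lookup_add lookup_minus lookup_oneA[OF A(1)])
      qed
      have "keys \<beta> \<subseteq> A" using a by (auto simp: \<beta>_def Exact_def in_keys_iff lookup_minus)
      moreover have "mon_deg \<beta> = n - card A"
      proof -
        have d1: "mon_deg \<alpha> = mon_deg \<beta> + card A"
          by (subst e) (simp add: mon_deg_add mon_deg_oneA)
        have "mon_deg \<alpha> = n" using a by (simp add: Exact_def)
        then show ?thesis using d1 by simp
      qed
      ultimately show "\<alpha> \<in> (\<lambda>\<beta>. \<beta> + oneA A) ` Sub A (n - card A)"
        using e by (auto simp: Sub_def)
    qed
    show "(\<lambda>\<beta>. \<beta> + oneA A) ` Sub A (n - card A) \<subseteq> Exact A n"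
      using False by (auto simp: Sub_def Exact_def keys_add_nat keys_oneA[OF A(1)] mon_deg_add mon_deg_oneA)
  qed
  have "card (Exact A n) = card (Sub A (n - card A))"
    unfolding eq by (rule card_image) (auto intro: inj_onI)
  also have "\<dots> = (card A + (n - card A) - 1) choose (n - card A)"
    by (rule card_Sub[OF A])
  also have "card A + (n - card A) - 1 = n - 1" using False by simp
  also have "(n - 1) choose (n - card A) = (n - 1) choose (card A - 1)"
    using binomial_symmetric[of "card A - 1" "n - 1"] False cA by (simp add: diff_diff_eq)
  finally show ?thesis .
qed

lemma Exact_empty: "1 \<le> n \<Longrightarrow> Exact {} n = {}"
  by (auto simp: Exact_def)

definition Std :: "nat \<Rightarrow> nat \<Rightarrow> nat \<Rightarrow> mon set" where
  "Std m k n = {\<alpha> \<in> Mon m k n. \<forall>l<k. \<not> Blk m l \<subseteq> keys \<alpha>}"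

definition Allowed :: "nat \<Rightarrow> nat \<Rightarrow> (nat \<times> nat \<times> nat) set set" where
  "Allowed m k = {A. A \<subseteq> Vset m k \<and> (\<forall>l<k. \<not> Blk m l \<subseteq> A)}"

lemma finite_Allowed: "finite (Allowed m k)"
proof -
  have "Allowed m k \<subseteq> Pow (Vset m k)" by (auto simp: Allowed_def)
  then show ?thesis by (rule finite_subset) simp
qed

lemma Std_UN: "Std m k n = (\<Union>A\<in>Allowed m k. Exact A n)"
  by (auto simp: Std_def Allowed_def Exact_def Mon_def)

lemma card_Std_sum: "card (Std m k n) = (\<Sum>A\<in>Allowed m k. card (Exact A n))"
  unfolding Std_UN
proof (rule card_UN_disjoint)
  show "finite (Allowed m k)" by (rule finite_Allowed)
  show "\<forall>A\<in>Allowed m k. finite (Exact A n)"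
    by (auto simp: Allowed_def intro!: finite_Exact intro: finite_subset[OF _ finite_Vset])
  show "\<forall>A\<in>Allowed m k. \<forall>B\<in>Allowed m k. A \<noteq> B \<longrightarrow> Exact A n \<inter> Exact B n = {}"
    by (auto simp: Exact_def)
qed

lemma card_Std_group:
  assumes n: "1 \<le> n"
  shows "card (Std m k n) =
    (\<Sum>s\<le>card (Vset m k). card {A \<in> Allowed m k. card A = s} * (if s = 0 then 0 else (n - 1) choose (s - 1)))"
proof -
  let ?w = "\<lambda>s. if s = 0 then 0 else (n - 1) choose (s - 1)"
  have "card (Std m k n) = (\<Sum>A\<in>Allowed m k. ?w (card A))"
    unfolding card_Std_sum
  proof (rule sum.cong[OF refl])
    fix A assume A: "A \<in> Allowed m k"
    have fA: "finite A" using A by (auto simp: Allowed_def intro: finite_subset[OF _ finite_Vset])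
    show "card (Exact A n) = ?w (card A)"
    proof (cases "A = {}")
      case True then show ?thesis using Exact_empty[OF n] by simp
    next
      case False then show ?thesis using card_Exact[OF fA False n] fA by simp
    qed
  qed
  also have "\<dots> = (\<Sum>s\<le>card (Vset m k). \<Sum>A\<in>{A \<in> Allowed m k. card A = s}. ?w (card A))"
  proof (rule sum.group[symmetric])
    show "finite (Allowed m k)" by (rule finite_Allowed)
    show "finite {..card (Vset m k)}" by simp
    show "card ` Allowed m k \<subseteq> {..card (Vset m k)}"
      by (auto simp: Allowed_def intro: card_mono)
  qed
  also have "\<dots> = (\<Sum>s\<le>card (Vset m k). card {A \<in> Allowed m k. card A = s} * ?w s)"
    by (rule sum.cong[OF refl]) simp
  finally show ?thesis .
qed



definition GP :: "'v set \<Rightarrow> ('v set \<Rightarrow> bool) \<Rightarrow> nat poly" where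
  "GP X Q = (\<Sum>A\<in>{A. A \<subseteq> X \<and> Q A}. monom 1 (card A))"

lemma coeff_GP:
  assumes "finite X"
  shows "coeff (GP X Q) s = card {A. A \<subseteq> X \<and> Q A \<and> card A = s}"
proof -
  have fin: "finite {A. A \<subseteq> X \<and> Q A}" using assms by simp
  have "coeff (GP X Q) s = (\<Sum>A\<in>{A. A \<subseteq> X \<and> Q A}. if card A = s then (1::nat) else 0)"
    unfolding GP_def coeff_sum coeff_monom by (rule sum.cong) auto
  also have "\<dots> = (\<Sum>A\<in>{A \<in> {A. A \<subseteq> X \<and> Q A}. card A = s}. 1)"
    by (rule sum.inter_filter[OF fin, symmetric])
  also have "{A \<in> {A. A \<subseteq> X \<and> Q A}. card A = s} = {A. A \<subseteq> X \<and> Q A \<and> card A = s}" by auto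
  finally show ?thesis by simp
qed

lemma GP_cong: "(\<And>A. A \<subseteq> X \<Longrightarrow> Q A = Q' A) \<Longrightarrow> GP X Q = GP X Q'"
proof -
  assume "\<And>A. A \<subseteq> X \<Longrightarrow> Q A = Q' A"
  then have "{A. A \<subseteq> X \<and> Q A} = {A. A \<subseteq> X \<and> Q' A}" by auto
  then show ?thesis by (simp add: GP_def)
qed

lemma GP_union:
  assumes fX: "finite X" and fY: "finite Y" and d: "X \<inter> Y = {}"
  shows "GP (X \<union> Y) (\<lambda>A. Q1 (A \<inter> X) \<and> Q2 (A \<inter> Y)) = GP X Q1 * GP Y Q2"
proof -
  let ?S1 = "{A. A \<subseteq> X \<and> Q1 A}" and ?S2 = "{A. A \<subseteq> Y \<and> Q2 A}"
  let ?S = "{A. A \<subseteq> X \<union> Y \<and> Q1 (A \<inter> X) \<and> Q2 (A \<inter> Y)}"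
  have "GP X Q1 * GP Y Q2 = (\<Sum>A1\<in>?S1. \<Sum>A2\<in>?S2. monom 1 (card A1 + card A2))"
    by (simp add: GP_def sum_product mult_monom)
  also have "\<dots> = (\<Sum>p\<in>?S1 \<times> ?S2. monom 1 (card (fst p \<union> snd p)))"
  proof -
    have "\<And>A1 A2. A1 \<in> ?S1 \<Longrightarrow> A2 \<in> ?S2 \<Longrightarrow> card A1 + card A2 = card (A1 \<union> A2)"
      using fX fY d by (subst card_Un_disjoint) (auto intro: finite_subset)
    then show ?thesis by (simp add: sum.cartesian_product split_def)
  qed
  also have "\<dots> = (\<Sum>A\<in>?S. monom 1 (card A))"
  proof (rule sum.reindex_bij_betw[where h="\<lambda>p. fst p \<union> snd p", unfolded comp_def])
    show "bij_betw (\<lambda>p. fst p \<union> snd p) (?S1 \<times> ?S2) ?S"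
    proof (rule bij_betwI[where g="\<lambda>A. (A \<inter> X, A \<inter> Y)"])
      show "(\<lambda>p. fst p \<union> snd p) \<in> ?S1 \<times> ?S2 \<rightarrow> ?S"
      proof
        fix p assume p: "p \<in> ?S1 \<times> ?S2"
        then have e1: "(fst p \<union> snd p) \<inter> X = fst p" and e2: "(fst p \<union> snd p) \<inter> Y = snd p"
          using d by auto
        show "fst p \<union> snd p \<in> ?S" using p by (auto simp: e1 e2)
      qed
      show "(\<lambda>A. (A \<inter> X, A \<inter> Y)) \<in> ?S \<rightarrow> ?S1 \<times> ?S2" by auto
      show "\<And>p. p \<in> ?S1 \<times> ?S2 \<Longrightarrow> ((fst p \<union> snd p) \<inter> X, (fst p \<union> snd p) \<inter> Y) = p"
        using d by auto
      show "\<And>A. A \<in> ?S \<Longrightarrow> fst (A \<inter> X, A \<inter> Y) \<union> snd (A \<inter> X, A \<inter> Y) = A" by auto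
    qed
  qed
  finally show ?thesis by (simp add: GP_def)
qed

definition Q0 :: "nat \<Rightarrow> nat poly" where
  "Q0 m = (\<Sum>j<m. monom (m choose j) j)"

lemma coeff_Q0: "coeff (Q0 m) s = (if s < m then m choose s else 0)"
  by (simp add: Q0_def coeff_sum)

lemma GP_blk: "GP (Blk m l) (\<lambda>B. B \<noteq> Blk m l) = Q0 m"
proof (rule poly_eqI)
  fix s
  have "coeff (GP (Blk m l) (\<lambda>B. B \<noteq> Blk m l)) s = card {A. A \<subseteq> Blk m l \<and> A \<noteq> Blk m l \<and> card A = s}"
    by (simp add: coeff_GP)
  also have "\<dots> = (if s < m then m choose s else 0)"
  proof (cases "s < m")
    case True
    then have "{A. A \<subseteq> Blk m l \<and> A \<noteq> Blk m l \<and> card A = s} = {A. A \<subseteq> Blk m l \<and> card A = s}"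
      using card_Blk[of m l] by auto
    then show ?thesis using True n_subsets[of "Blk m l" s] by (simp add: card_Blk)
  next
    case False
    have "{A. A \<subseteq> Blk m l \<and> A \<noteq> Blk m l \<and> card A = s} = {}"
    proof (rule ccontr)
      assume "{A. A \<subseteq> Blk m l \<and> A \<noteq> Blk m l \<and> card A = s} \<noteq> {}"
      then obtain A where A: "A \<subseteq> Blk m l" "A \<noteq> Blk m l" "card A = s" by blast
      have "card A \<le> card (Blk m l)" using A(1) by (intro card_mono) simp_all
      then have "card A = card (Blk m l)" using A(3) False card_Blk[of m l] by simp
      then have "A = Blk m l" using A(1) by (intro card_subset_eq) simp_all
      with A(2) show False by simp
    qed
    then show ?thesis using False by simp
  qed
  finally show "coeff (GP (Blk m l) (\<lambda>B. B \<noteq> Blk m l)) s = coeff (Q0 m) s"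
    by (simp add: coeff_Q0)
qed

lemma coeff_lin_power: "coeff ([:1, 1:] ^ n :: nat poly) s = n choose s"
proof (cases "s \<le> n")
  case True then show ?thesis by (simp add: coeff_linear_poly_power)
next
  case False
  have "degree ([:1, 1:] ^ n :: nat poly) \<le> degree ([:1, 1:] :: nat poly) * n" by (rule degree_power_le)
  then have "degree ([:1, 1:] ^ n :: nat poly) < s" using False by simp
  then show ?thesis using False by (simp add: coeff_eq_0)
qed

lemma GP_free: "finite R \<Longrightarrow> GP R (\<lambda>_. True) = [:1, 1:] ^ card R"
  by (rule poly_eqI, subst coeff_lin_power) (simp add: coeff_GP n_subsets)

definition U :: "nat \<Rightarrow> nat \<Rightarrow> (nat \<times> nat \<times> nat) set" where
  "U m t = (\<Union>l<t. Blk m l)"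

lemma finite_U [simp]: "finite (U m t)"
  by (simp add: U_def)

lemma GP_blocks: "GP (U m t) (\<lambda>A. \<forall>l<t. \<not> Blk m l \<subseteq> A) = Q0 m ^ t"
proof (induction t)
  case 0
  have "{A. A \<subseteq> U m 0 \<and> (\<forall>l<0. \<not> Blk m l \<subseteq> A)} = {{}}" by (auto simp: U_def)
  moreover have "monom (1::nat) 0 = (1::nat poly)" by (rule poly_eqI) simp
  ultimately show ?case by (simp add: GP_def)
next
  case (Suc t)
  have Ueq: "U m (Suc t) = U m t \<union> Blk m t" by (simp add: U_def lessThan_Suc Un_commute)
  have dl: "\<forall>l<t. Blk m l \<inter> Blk m t = {}" by (intro allI impI Blk_disj) simp
  have d: "U m t \<inter> Blk m t = {}" using dl unfolding U_def by blast
  have "GP (U m (Suc t)) (\<lambda>A. \<forall>l<Suc t. \<not> Blk m l \<subseteq> A)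
      = GP (U m t \<union> Blk m t) (\<lambda>A. (\<lambda>B. \<forall>l<t. \<not> Blk m l \<subseteq> B) (A \<inter> U m t) \<and> (\<lambda>B. B \<noteq> Blk m t) (A \<inter> Blk m t))"
    unfolding Ueq
  proof (rule GP_cong)
    fix A assume A: "A \<subseteq> U m t \<union> Blk m t"
    have e1: "(\<forall>l<Suc t. \<not> Blk m l \<subseteq> A) = ((\<forall>l<t. \<not> Blk m l \<subseteq> A) \<and> \<not> Blk m t \<subseteq> A)"
      by (auto simp: less_Suc_eq)
    have sub: "\<And>l. l < t \<Longrightarrow> Blk m l \<subseteq> U m t" unfolding U_def by blast
    have e2: "(\<forall>l<t. \<not> Blk m l \<subseteq> A) = (\<forall>l<t. \<not> Blk m l \<subseteq> A \<inter> U m t)"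
      using sub by blast
    have e3: "(\<not> Blk m t \<subseteq> A) = (A \<inter> Blk m t \<noteq> Blk m t)" by blast
    show "(\<forall>l<Suc t. \<not> Blk m l \<subseteq> A) =
        ((\<lambda>B. \<forall>l<t. \<not> Blk m l \<subseteq> B) (A \<inter> U m t) \<and> (\<lambda>B. B \<noteq> Blk m t) (A \<inter> Blk m t))"
      unfolding e1 e2 e3 by simp
  qed
  also have "\<dots> = Q0 m ^ t * Q0 m"
    by (subst GP_union) (simp_all add: d Suc.IH GP_blk)
  finally show ?case by (simp add: mult.commute)
qed

lemma card_U: "card (U m t) = t * m"
proof -
  have "card (U m t) = (\<Sum>l<t. card (Blk m l))"
    unfolding U_def by (rule card_UN_disjoint) (auto dest: Blk_disj)
  then show ?thesis by (simp add: card_Blk)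
qed

lemma U_Vset: "U m k \<subseteq> Vset m k"
  using Blk_Vset by (auto simp: U_def)

definition Pfull :: "nat \<Rightarrow> nat \<Rightarrow> nat poly" where
  "Pfull m k = (\<Sum>j<m. monom (m choose j) j) ^ k * [:1, 1:] ^ (k * (m^2 - m))"

lemma fcoeff_Pfull: "fcoeff m k i = coeff (Pfull m k) (i + 1)"
  by (simp add: fcoeff_def Pfull_def)

lemma card_Allowed_coeff: "card {A \<in> Allowed m k. card A = s} = coeff (Pfull m k) s"
proof -
  let ?R = "Vset m k - U m k"
  have V: "Vset m k = U m k \<union> ?R" using U_Vset by auto
  have d: "U m k \<inter> ?R = {}" by auto
  have cR: "card ?R = k * (m^2 - m)"
  proof -
    have "card ?R = m * m * k - k * m" using card_Diff_subset[OF finite_U U_Vset] by (simp add: card_Vset card_U)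
    also have "\<dots> = k * (m^2 - m)" by (simp add: power2_eq_square diff_mult_distrib2 algebra_simps)
    finally show ?thesis .
  qed
  have "GP (Vset m k) (\<lambda>A. \<forall>l<k. \<not> Blk m l \<subseteq> A)
      = GP (U m k \<union> ?R) (\<lambda>A. (\<lambda>B. \<forall>l<k. \<not> Blk m l \<subseteq> B) (A \<inter> U m k) \<and> (\<lambda>_. True) (A \<inter> ?R))"
    unfolding V[symmetric]
  proof (rule GP_cong)
    fix A assume "A \<subseteq> Vset m k"
    have sub: "\<And>l. l < k \<Longrightarrow> Blk m l \<subseteq> U m k" unfolding U_def by blast
    have "(\<forall>l<k. \<not> Blk m l \<subseteq> A) = (\<forall>l<k. \<not> Blk m l \<subseteq> A \<inter> U m k)" using sub by blast
    then show "(\<forall>l<k. \<not> Blk m l \<subseteq> A) = ((\<lambda>B. \<forall>l<k. \<not> Blk m l \<subseteq> B) (A \<inter> U m k) \<and> (\<lambda>_. True) (A \<inter> ?R))"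
      by simp
  qed
  also have "\<dots> = Pfull m k"
    by (subst GP_union) (simp_all add: d GP_blocks GP_free cR Pfull_def Q0_def)
  finally have P: "GP (Vset m k) (\<lambda>A. \<forall>l<k. \<not> Blk m l \<subseteq> A) = Pfull m k" .
  have "card {A \<in> Allowed m k. card A = s} = card {A. A \<subseteq> Vset m k \<and> (\<forall>l<k. \<not> Blk m l \<subseteq> A) \<and> card A = s}"
    by (simp add: Allowed_def conj_assoc)
  also have "\<dots> = coeff (Pfull m k) s" by (simp add: coeff_GP[symmetric] P)
  finally show ?thesis .
qed

lemma degree_Pfull:
  assumes "0 < m"
  shows "degree (Pfull m k) \<le> k * (m^2 - 1)"
proof -
  have dq: "degree (\<Sum>j<m. monom (m choose j) j :: nat poly) \<le> m - 1"
    by (rule degree_sum_le) (auto intro: order.trans[OF degree_monom_le])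
  have "degree (Pfull m k) \<le> degree ((\<Sum>j<m. monom (m choose j) j :: nat poly) ^ k) + degree ([:1, 1:] ^ (k * (m^2 - m)) :: nat poly)"
    unfolding Pfull_def by (rule degree_mult_le)
  also have "\<dots> \<le> (m - 1) * k + 1 * (k * (m^2 - m))"
    by (intro add_mono order.trans[OF degree_power_le] mult_right_mono dq) simp_all
  also have "\<dots> = k * (m^2 - 1)"
  proof -
    have "m \<le> m^2" by (simp add: power2_eq_square)
    then have "(m - 1) + (m^2 - m) = m^2 - 1" using assms by linarith
    then show ?thesis by (metis (no_types) add_mult_distrib2 mult.commute mult_1)
  qed
  finally show ?thesis .
qed

lemma card_Std_final:
  assumes m: "0 < m" and n: "1 \<le> n"
  shows "card (Std m k n) = (\<Sum>i<k * (m^2 - 1). fcoeff m k i * ((n - 1) choose i))"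
proof -
  let ?V = "card (Vset m k)"
  let ?w = "\<lambda>s. if s = 0 then 0 else (n - 1) choose (s - 1)"
  have "card (Std m k n) = (\<Sum>s\<le>?V. coeff (Pfull m k) s * ?w s)"
    using card_Std_group[OF n] by (simp add: card_Allowed_coeff)
  also have "\<dots> = (\<Sum>s<Suc ?V. coeff (Pfull m k) s * ?w s)"
    by (simp add: lessThan_Suc_atMost)
  also have "\<dots> = (\<Sum>i<?V. fcoeff m k i * ((n - 1) choose i))"
    by (subst sum.lessThan_Suc_shift) (simp add: fcoeff_Pfull)
  also have "\<dots> = (\<Sum>i<k * (m^2 - 1). fcoeff m k i * ((n - 1) choose i))"
  proof (rule sum.mono_neutral_right)
    show "finite {..<?V}" by simp
    have "k * (m^2 - 1) \<le> m * m * k" by (simp add: power2_eq_square)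
    then show "{..<k * (m^2 - 1)} \<subseteq> {..<?V}" by (auto simp: card_Vset)
    show "\<forall>i\<in>{..<?V} - {..<k * (m^2 - 1)}. fcoeff m k i * ((n - 1) choose i) = 0"
    proof
      fix i assume "i \<in> {..<?V} - {..<k * (m^2 - 1)}"
      then have "degree (Pfull m k) < i + 1" using degree_Pfull[OF m, of k] by auto
      then show "fcoeff m k i * ((n - 1) choose i) = 0" by (simp add: fcoeff_Pfull coeff_eq_0)
    qed
  qed
  finally show ?thesis .
qed

theorem proposition3p8:
  fixes m k :: nat
  assumes "m \<ge> 2" and "k \<ge> 1"
  shows "\<exists>N. \<forall>n\<ge>N. hilbert_fun TYPE('a::alg_closed_field) m k n =
            (\<Sum>i<k * (m^2 - 1). fcoeff m k i * ((n - 1) choose i))"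
proof (intro exI allI impI)
  fix n assume n: "m \<le> n"
  have m: "0 < m" using assms by simp
  have ne: "n = (n - m) + m" using n by simp
  have "hilbert_fun TYPE('a) m k n = card (Mon m k n) - card (NonStd m k n)"
    using hilbert_eq[OF m, of k "n - m", where 'a='a] ne by simp
  also have "\<dots> = card (Std m k n)"
  proof -
    have "Std m k n = Mon m k n - NonStd m k n" by (auto simp: Std_def NonStd_def)
    moreover have "NonStd m k n \<subseteq> Mon m k n" by (auto simp: NonStd_def)
    ultimately show ?thesis using finite_Mon by (simp add: card_Diff_subset finite_subset)
  qed
  also have "\<dots> = (\<Sum>i<k * (m^2 - 1). fcoeff m k i * ((n - 1) choose i))"
    by (rule card_Std_final) (use m n in auto)
  finally show "hilbert_fun TYPE('a) m k n = (\<Sum>i<k * (m^2 - 1). fcoeff m k i * ((n - 1) choose i))" .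
qed


end
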